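(* For every integer $s \geq 1$, every integer $m \geq 1$, every integer $\ell > |V(H[s])| + m + s$, and every graph $H[s,\ell,m]$ constructed as described, it holds that $c(H[s,\ell,m]) \leq 2$.
   Context: Construction. Let $s \geq 1$ and $k = 2^{s-1}$. Let $H[s]$ be any $2k$-regular graph with girth at least $5$, endowed with an orientation in which every vertex has exactly $k$ outgoing and $k$ incoming edges. Given an integer $\ell \geq 1$, build $H[s,\ell]$: for each vertex $a$ of $H[s]$ take a complete balanced binary tree $T(a)$ of height $s$ with root $r(a)$ and $2^s = 2k$ leaves; let $r^{\mathrm{in}}(a), r^{\mathrm{out}}(a)$ be the two children of $r(a)$ and $T^{\mathrm{in}}(a), T^{\mathrm{out}}(a)$ the subtrees rooted at them. Associate bijectively the $k$ leaves of $T^{\mathrm{in}}(a)$ with the $k$ incoming edges at $a$ and the $k$ leaves of $T^{\mathrm{out}}(a)$ with the $k$ outgoing edges at $a$. For each edge $ab$ of $H[s]$ oriented from $a$ to $b$, join the leaf of $T^{\mathrm{out}}(a)$ associated with $ab$ to the leaf of $T^{\mathrm{in}}(b)$ associated with $ab$ by a path $P(ab)$ of length $2\ell+1$ (with $2\ell$ new inner vertices); let $e(ab)$ be its middle edge, with endpoint $v(a,b)$ on the side of $a$ and $v(b,a)$ on the side of $b$. Given an integer $m \geq 1$, build $H[s,\ell,m]$: take two vertex-disjoint copies $H_1, H_2$ of $H[s,\ell]$ (with notation indexed by $1,2$), and for every edge $ab$ of $H[s]$ identify $e_1(ab)$ with $e_2(ab)$ so that $v_1(a,b)=v_2(a,b)$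 and $v_1(b,a)=v_2(b,a)$. For each vertex $a$ of $H[s]$ attach to $r_1(a)$ a new path $Q(a)$ of length $m$ with other endpoint $q(a)$. Finally add a cycle $C$ of length $|V(H[s])|$ passing through all vertices $q(a)$, $a \in V(H[s])$. Classical Cops and Robber: players alternate turns, cops first; the cops are placed on vertices, then the robber is placed on a vertex; in a turn each piece of the moving player may stay or move to an adjacent vertex; cops win if some cop is on the robber's vertex; $c(G)$ is the least number of cops that can force a win in finitely many turns. *)

theory Defs
  imports Main
begin

definition cop_step :: "('a \<Rightarrow> 'a \<Rightarrow> bool) \<Rightarrow> 'a list \<Rightarrow> 'a list \<Rightarrow> bool" where
  "cop_step adj cs cs' \<longleftrightarrow> length cs' = length cs \<and>
     (\<forall>i < length cs. cs' ! i = cs ! i \<or> adj (cs ! i) (cs' ! i))"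

definition rob_step :: "('a \<Rightarrow> 'a \<Rightarrow> bool) \<Rightarrow> 'a \<Rightarrow> 'a \<Rightarrow> bool" where
  "rob_step adj r r' \<longleftrightarrow> r' = r \<or> adj r r'"

text \<open>cops_win_within adj n cs r: it is the cops' turn, cops at cs, robber at r;
  the cops can force a capture within n cop turns.\<close>
fun cops_win_within :: "('a \<Rightarrow> 'a \<Rightarrow> bool) \<Rightarrow> nat \<Rightarrow> 'a list \<Rightarrow> 'a \<Rightarrow> bool" where
  "cops_win_within adj 0 cs r = (r \<in> set cs)"
| "cops_win_within adj (Suc n) cs r =
     (r \<in> set cs \<or>
      (\<exists>cs'. cop_step adj cs cs' \<and>
         (r \<in> set cs' \<or> (\<forall>r'. rob_step adj r r' \<longrightarrow> cops_win_within adj n cs' r'))))"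

definition cops_win :: "'a set \<Rightarrow> ('a \<Rightarrow> 'a \<Rightarrow> bool) \<Rightarrow> nat \<Rightarrow> bool" where
  "cops_win VV adj k \<longleftrightarrow>
     (\<exists>cs. length cs = k \<and> set cs \<subseteq> VV \<and>
        (\<forall>r \<in> VV. \<exists>n. cops_win_within adj n cs r))"

definition cop_number :: "'a set \<Rightarrow> ('a \<Rightarrow> 'a \<Rightarrow> bool) \<Rightarrow> nat" where
  "cop_number VV adj = (LEAST k. cops_win VV adj k)"

definition uadj :: "('v \<times> 'v) set \<Rightarrow> 'v \<Rightarrow> 'v \<Rightarrow> bool" where
  "uadj A a b \<longleftrightarrow> (a, b) \<in> A \<or> (b, a) \<in> A"

definition girth_ge5 :: "('v \<times> 'v) set \<Rightarrow> bool" where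
  "girth_ge5 A \<longleftrightarrow>
     (\<forall>a b c. \<not> (uadj A a b \<and> uadj A b c \<and> uadj A c a)) \<and>
     (\<forall>a b c d. a \<noteq> c \<and> b \<noteq> d \<longrightarrow>
         \<not> (uadj A a b \<and> uadj A b c \<and> uadj A c d \<and> uadj A d a))"

definition balanced_oriented_base :: "nat \<Rightarrow> 'v set \<Rightarrow> ('v \<times> 'v) set \<Rightarrow> bool" where
  "balanced_oriented_base k V A \<longleftrightarrow>
     finite V \<and> V \<noteq> {} \<and> A \<subseteq> V \<times> V \<and>
     (\<forall>a. (a, a) \<notin> A) \<and> (\<forall>a b. (a, b) \<in> A \<longrightarrow> (b, a) \<notin> A) \<and>
     (\<forall>a \<in> V. card {b. (a, b) \<in> A} = k \<and> card {b. (b, a) \<in> A} = k) \<and>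
     girth_ge5 A"

text \<open>Vertices: T c a xs is the node xs (a bool list of length <= s, root = []) of the
  tree T_c(a) in copy c (True = copy 1, False = copy 2); lists starting with False form
  T^in(a), lists starting with True form T^out(a). P c e j is the j-th inner vertex
  (1 <= j <= 2l) of the path P_c(e); for j = l, l+1 (endpoints of the middle edge, shared by
  both copies) only c = True is used. Q a i is the i-th vertex (1 <= i <= m) of Q(a),
  so Q a m = q(a).\<close>
datatype 'v hvert = T bool 'v "bool list" | P bool "'v \<times> 'v" nat | Q 'v nat

definition pnode :: "nat \<Rightarrow> ('v \<Rightarrow> 'v \<times> 'v \<Rightarrow> bool list) \<Rightarrow> ('v \<Rightarrow> 'v \<times> 'v \<Rightarrow> bool list)
    \<Rightarrow> bool \<Rightarrow> 'v \<times> 'v \<Rightarrow> nat \<Rightarrow> 'v hvert" where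
  "pnode l inl outl c e j =
     (if j = 0 then T c (fst e) (outl (fst e) e)
      else if j = 2 * l + 1 then T c (snd e) (inl (snd e) e)
      else if j = l \<or> j = l + 1 then P True e j
      else P c e j)"

definition qnode :: "'v \<Rightarrow> nat \<Rightarrow> 'v hvert" where
  "qnode a i = (if i = 0 then T True a [] else Q a i)"

definition Hverts :: "nat \<Rightarrow> nat \<Rightarrow> nat \<Rightarrow> 'v set \<Rightarrow> ('v \<times> 'v) set \<Rightarrow> 'v hvert set" where
  "Hverts s l m V A =
     {T c a xs | c a xs. a \<in> V \<and> length xs \<le> s} \<union>
     {P c e j | c e j. e \<in> A \<and> 1 \<le> j \<and> j \<le> 2 * l \<and> ((j = l \<or> j = l + 1) \<longrightarrow> c)} \<union>
     {Q a i | a i. a \<in> V \<and> 1 \<le> i \<and> i \<le> m}"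

definition Hedges :: "nat \<Rightarrow> nat \<Rightarrow> nat \<Rightarrow> 'v set \<Rightarrow> ('v \<times> 'v) set
    \<Rightarrow> ('v \<Rightarrow> 'v \<times> 'v \<Rightarrow> bool list) \<Rightarrow> ('v \<Rightarrow> 'v \<times> 'v \<Rightarrow> bool list) \<Rightarrow> (nat \<Rightarrow> 'v)
    \<Rightarrow> ('v hvert \<times> 'v hvert) set" where
  "Hedges s l m V A inl outl \<sigma> =
     {(T c a xs, T c a (xs @ [b])) | c a xs b. a \<in> V \<and> length xs < s} \<union>
     {(pnode l inl outl c e j, pnode l inl outl c e (Suc j)) | c e j. e \<in> A \<and> j \<le> 2 * l} \<union>
     {(qnode a i, qnode a (Suc i)) | a i. a \<in> V \<and> i < m} \<union>
     {(Q (\<sigma> i) m, Q (\<sigma> ((i + 1) mod card V)) m) | i. i < card V}"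

definition Hadj :: "nat \<Rightarrow> nat \<Rightarrow> nat \<Rightarrow> 'v set \<Rightarrow> ('v \<times> 'v) set
    \<Rightarrow> ('v \<Rightarrow> 'v \<times> 'v \<Rightarrow> bool list) \<Rightarrow> ('v \<Rightarrow> 'v \<times> 'v \<Rightarrow> bool list) \<Rightarrow> (nat \<Rightarrow> 'v)
    \<Rightarrow> 'v hvert \<Rightarrow> 'v hvert \<Rightarrow> bool" where
  "Hadj s l m V A inl outl \<sigma> x y \<longleftrightarrow>
     (x, y) \<in> Hedges s l m V A inl outl \<sigma> \<or> (y, x) \<in> Hedges s l m V A inl outl \<sigma>"

end

theory Submission
  imports Defs "HOL-Library.Sublist"
begin


definition near :: "('a \<Rightarrow> 'a \<Rightarrow> bool) \<Rightarrow> 'a \<Rightarrow> 'a \<Rightarrow> bool" where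
  "near adj x y \<longleftrightarrow> y = x \<or> adj x y"

inductive Reach :: "('a \<Rightarrow> 'a \<Rightarrow> bool) \<Rightarrow> ('a \<Rightarrow> 'a \<Rightarrow> 'a \<Rightarrow> bool) \<Rightarrow> 'a \<Rightarrow> 'a \<Rightarrow> 'a \<Rightarrow> bool"
  for adj Gl where
  base: "Gl p1 p2 r \<Longrightarrow> Reach adj Gl p1 p2 r"
| cap: "r = p1 \<or> r = p2 \<Longrightarrow> Reach adj Gl p1 p2 r"
| step: "near adj p1 p1' \<Longrightarrow> near adj p2 p2' \<Longrightarrow>
    (r = p1' \<or> r = p2' \<or> (\<forall>r'. rob_step adj r r' \<longrightarrow> Reach adj Gl p1' p2' r')) \<Longrightarrow>
    Reach adj Gl p1 p2 r"

lemma Reach_mono: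
  assumes "Reach adj Gl p1 p2 r" and "\<And>p1 p2 r. Gl p1 p2 r \<Longrightarrow> Reach adj Gl2 p1 p2 r"
  shows "Reach adj Gl2 p1 p2 r"
  using assms(1)
proof induction
  case (base p1 p2 r) then show ?case using assms(2) by blast
next
  case (cap r p1 p2) then show ?case by (rule Reach.cap)
next
  case (step p1 p1' p2 p2' r) then show ?case by (meson Reach.step)
qed

lemma Reach_swap:
  assumes "Reach adj Gl p1 p2 r"
  shows "Reach adj (\<lambda>a b. Gl b a) p2 p1 r"
  using assms
proof induction
  case (base p1 p2 r) then show ?case by (simp add: Reach.base)
next
  case (cap r p1 p2) then show ?case by (meson Reach.cap)
next
  case (step p1 p1' p2 p2' r) then show ?case by (meson Reach.step)
qed

lemma cww_mono:
  "cops_win_within adj n cs r \<Longrightarrow> n \<le> n' \<Longrightarrow> cops_win_within adj n' cs r"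
proof (induction n arbitrary: n' cs r)
  case 0
  then show ?case by (cases n') auto
next
  case (Suc n)
  then obtain n'' where n': "n' = Suc n''" and nn: "n \<le> n''" by (cases n') auto
  from Suc.prems(1) show ?case unfolding n' cops_win_within.simps
    using Suc.IH[OF _ nn] by blast
qed

lemma finite_uniform:
  fixes PP :: "'a \<Rightarrow> nat \<Rightarrow> bool"
  assumes "finite F" and "\<forall>x\<in>F. \<exists>n. PP x n" and "\<And>x n n'. PP x n \<Longrightarrow> n \<le> n' \<Longrightarrow> PP x n'"
  shows "\<exists>N. \<forall>x\<in>F. PP x N"
  using assms(1,2)
proof (induction F rule: finite_induct)
  case empty then show ?case by auto
next
  case (insert x F)
  then obtain N where N: "\<forall>y\<in>F. PP y N" by blast
  obtain n where n: "PP x n" using insert.prems by blast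
  show ?case
  proof (intro exI ballI)
    fix y assume "y \<in> insert x F"
    then show "PP y (max N n)"
    proof (cases "y = x")
      case True
      have "PP x (max N n)" using n assms(3)[of x n "max N n"] max.cobounded2[of n N] by blast
      then show ?thesis using True by simp
    next
      case False then have "y \<in> F" using \<open>y \<in> insert x F\<close> by blast
      then show ?thesis using N assms(3)[of y N "max N n"] max.cobounded1[of N n] by blast
    qed
  qed
qed

lemma Reach_cww:
  assumes "Reach adj (\<lambda>_ _ _. False) p1 p2 r" and fin: "\<And>x. finite {y. adj x y}"
  shows "\<exists>n. cops_win_within adj n [p1, p2] r"
  using assms(1)
proof induction
  case (base p1 p2 r) then show ?case by simp
next
  case (cap r p1 p2) then show ?case by (intro exI[where x="0::nat"]) auto
next
  case (step p1 p1' p2 p2' r)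
  have cs: "cop_step adj [p1, p2] [p1', p2']"
    using step(1,2) unfolding cop_step_def near_def
    by (auto simp: less_Suc_eq nth_Cons')
  show ?case
  proof (cases "r = p1' \<or> r = p2'")
    case True
    then have "cops_win_within adj (Suc 0) [p1, p2] r"
      unfolding cops_win_within.simps
      by (intro disjI2 exI[of _ "[p1', p2']"] conjI[OF cs] disjI1) auto
    then show ?thesis by blast
  next
    case False
    then have H: "\<forall>r'. rob_step adj r r' \<longrightarrow> (\<exists>n. cops_win_within adj n [p1', p2'] r')"
      using step(3) by auto
    have "finite {r'. rob_step adj r r'}"
    proof -
      have "{r'. rob_step adj r r'} \<subseteq> insert r {y. adj r y}" by (auto simp: rob_step_def)
      then show ?thesis using fin finite_subset by blast
    qed
    moreover have "\<forall>x\<in>{r'. rob_step adj r r'}. \<exists>n. cops_win_within adj n [p1', p2'] x"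
      using H by blast
    ultimately obtain N where "\<forall>r'\<in>{r'. rob_step adj r r'}. cops_win_within adj N [p1', p2'] r'"
      using finite_uniform[of "{r'. rob_step adj r r'}" "\<lambda>r' n. cops_win_within adj n [p1', p2'] r'"]
        cww_mono by (metis (no_types, lifting))
    then have "cops_win_within adj (Suc N) [p1, p2] r"
      unfolding cops_win_within.simps
      by (intro disjI2 exI[of _ "[p1', p2']"] conjI[OF cs]) auto
    then show ?thesis by blast
  qed
qed

lemma Reach_measure:
  fixes \<mu> :: "'a \<Rightarrow> 'a \<Rightarrow> 'a \<Rightarrow> nat"
  assumes "S p1 p2 r"
    and H: "\<And>p1 p2 r. S p1 p2 r \<Longrightarrow> \<not> Gl p1 p2 r \<Longrightarrow> r \<noteq> p1 \<Longrightarrow> r \<noteq> p2 \<Longrightarrow>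
      \<exists>p1' p2'. near adj p1 p1' \<and> near adj p2 p2' \<and> (r = p1' \<or> r = p2' \<or>
        (\<forall>r'. rob_step adj r r' \<longrightarrow> Gl p1' p2' r' \<or> r' = p1' \<or> r' = p2' \<or>
            (S p1' p2' r' \<and> \<mu> p1' p2' r' < \<mu> p1 p2 r)))"
  shows "Reach adj Gl p1 p2 r"
proof -
  have "\<And>p1 p2 r. \<mu> p1 p2 r = k \<Longrightarrow> S p1 p2 r \<Longrightarrow> Reach adj Gl p1 p2 r" for k :: nat
  proof (induction k rule: less_induct)
    case (less k p1 p2 r)
    show ?case
    proof (cases "Gl p1 p2 r \<or> r = p1 \<or> r = p2")
      case True then show ?thesis by (meson Reach.base Reach.cap)
    next
      case False
      then obtain p1' p2' where a: "near adj p1 p1'" "near adj p2 p2'" and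
        b: "r = p1' \<or> r = p2' \<or>
        (\<forall>r'. rob_step adj r r' \<longrightarrow> Gl p1' p2' r' \<or> r' = p1' \<or> r' = p2' \<or>
            (S p1' p2' r' \<and> \<mu> p1' p2' r' < \<mu> p1 p2 r))"
        using H[OF less(3)] by blast
      show ?thesis
      proof (rule Reach.step[OF a])
        show "r = p1' \<or> r = p2' \<or> (\<forall>r'. rob_step adj r r' \<longrightarrow> Reach adj Gl p1' p2' r')"
        proof -
          { fix r' assume "rob_step adj r r'" and "\<not> (r = p1' \<or> r = p2')"
            then have "Gl p1' p2' r' \<or> r' = p1' \<or> r' = p2' \<or>
              (S p1' p2' r' \<and> \<mu> p1' p2' r' < \<mu> p1 p2 r)" using b by blast
            then have "Reach adj Gl p1' p2' r'"
              using less(1) less(2) Reach.base Reach.cap by metis }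
          then show ?thesis by blast
        qed
      qed
    qed
  qed
  then show ?thesis using assms(1) by blast
qed

lemma Reach_travel:
  assumes walk: "(adj\<^sup>*\<^sup>*) p2 (t r)"
    and g: "near adj p1 (g r)" and K: "K r"
    and gne: "\<And>r r'. rob_step adj r r' \<Longrightarrow> near adj (g r) (g r')"
    and stab: "\<And>r r' p2. K r \<Longrightarrow> rob_step adj r r' \<Longrightarrow> (adj\<^sup>*\<^sup>*) p2 (t r) \<Longrightarrow>
       Gl (g r) p2 r' \<or> (K r' \<and> t r' = t r)"
    and fin: "\<And>p1 r. near adj p1 (g r) \<Longrightarrow> K r \<Longrightarrow> Reach adj Gl p1 (t r) r"
  shows "Reach adj Gl p1 p2 r"
proof -
  have "\<And>p1 r. t r = tt \<Longrightarrow> near adj p1 (g r) \<Longrightarrow> K r \<Longrightarrow> Reach adj Gl p1 p2 r"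
    if "(adj\<^sup>*\<^sup>*) p2 tt" for p2 tt
    using that
  proof (induction rule: converse_rtranclp_induct)
    case base
    then show ?case using fin by blast
  next
    case (step p2 z)
    show ?case
    proof (rule Reach.step[of adj p1 "g r" p2 z])
      show "near adj p1 (g r)" by fact
      show "near adj p2 z" using step(1) by (simp add: near_def)
      show "r = g r \<or> r = z \<or> (\<forall>r'. rob_step adj r r' \<longrightarrow> Reach adj Gl (g r) z r')"
      proof (intro disjI2 allI impI)
        fix r' assume rs: "rob_step adj r r'"
        have zt: "(adj\<^sup>*\<^sup>*) z (t r)" using step(2) step(4) by simp
        from stab[OF step(6) rs zt] show "Reach adj Gl (g r) z r'"
        proof
          assume "Gl (g r) z r'" then show ?thesis by (rule Reach.base)
        next
          assume "K r' \<and> t r' = t r"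
          then show ?thesis using step(3)[of r' "g r"] step(4) gne[OF rs] by auto
        qed
      qed
    qed
  qed
  then show ?thesis using assms by blast
qed




fun phi :: "'v hvert \<Rightarrow> 'v hvert" where
  "phi (T c a xs) = T True a xs" | "phi (P c e j) = P True e j" | "phi (Q a i) = Q a i"
fun isX :: "'v hvert \<Rightarrow> bool" where
  "isX (T c a xs) = c" | "isX (P c e j) = False" | "isX (Q a i) = True"
fun isG1 :: "'v hvert \<Rightarrow> bool" where
  "isG1 (T c a xs) = c" | "isG1 (P c e j) = c" | "isG1 (Q a i) = True"
fun pedge :: "'v hvert \<Rightarrow> 'v \<times> 'v" where
  "pedge (P c e j) = e" | "pedge _ = undefined"
fun pidx :: "'v hvert \<Rightarrow> nat" where
  "pidx (P c e j) = j" | "pidx _ = 0"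

locale G5 =
  fixes s l m :: nat and V :: "'v set" and A :: "('v \<times> 'v) set"
    and inl outl :: "'v \<Rightarrow> 'v \<times> 'v \<Rightarrow> bool list" and \<sigma> :: "nat \<Rightarrow> 'v"
  assumes s1: "s \<ge> 1" and m1: "m \<ge> 1" and lbig: "l > card V + m + s"
    and base: "balanced_oriented_base (2 ^ (s - 1)) V A"
    and inlb: "\<forall>a \<in> V. bij_betw (inl a) {e \<in> A. snd e = a} {xs. length xs = s \<and> hd xs = False}"
    and outlb: "\<forall>a \<in> V. bij_betw (outl a) {e \<in> A. fst e = a} {xs. length xs = s \<and> hd xs = True}"
    and sig: "bij_betw \<sigma> {..<card V} V"
begin

abbreviation "N \<equiv> card V"
abbreviation "pn \<equiv> pnode l inl outl"

definition adj where "adj = Hadj s l m V A inl outl \<sigma>"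
definition VV where "VV = Hverts s l m V A"

lemma finV: "finite V" and Vne: "V \<noteq> {}" and AV: "A \<subseteq> V \<times> V"
  and noloop: "(a, a) \<notin> A" and asym: "(a, b) \<in> A \<Longrightarrow> (b, a) \<notin> A"
  and outdeg: "a \<in> V \<Longrightarrow> card {b. (a, b) \<in> A} = 2 ^ (s - 1)"
  using base unfolding balanced_oriented_base_def by auto

lemma l2: "l \<ge> 2" using lbig m1 s1 by linarith
lemma N1: "N \<ge> 1" using finV Vne by (simp add: Suc_leI card_gt_0_iff)

lemma A_V: "e \<in> A \<Longrightarrow> fst e \<in> V \<and> snd e \<in> V" using AV by auto
lemma A_ne: "e \<in> A \<Longrightarrow> fst e \<noteq> snd e" using noloop by (cases e) auto

lemma outl_len: "e \<in> A \<Longrightarrow> length (outl (fst e) e) = s \<and> hd (outl (fst e) e) = True"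
proof -
  assume e: "e \<in> A"
  then have "fst e \<in> V" using A_V by blast
  then have "outl (fst e) ` {e' \<in> A. fst e' = fst e} = {xs. length xs = s \<and> hd xs = True}"
    using outlb bij_betw_imp_surj_on by blast
  then show ?thesis using e by blast
qed

lemma inl_len: "e \<in> A \<Longrightarrow> length (inl (snd e) e) = s \<and> hd (inl (snd e) e) = False"
proof -
  assume e: "e \<in> A"
  then have "snd e \<in> V" using A_V by blast
  then have "inl (snd e) ` {e' \<in> A. snd e' = snd e} = {xs. length xs = s \<and> hd xs = False}"
    using inlb bij_betw_imp_surj_on by blast
  then show ?thesis using e by blast
qed

lemma out_exists: "a \<in> V \<Longrightarrow> \<exists>b. (a, b) \<in> A"
proof (rule ccontr)
  assume "a \<in> V" "\<not> (\<exists>b. (a, b) \<in> A)"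
  then have "card {b. (a, b) \<in> A} = 0" by simp
  moreover have "card {b. (a, b) \<in> A} = 2 ^ (s - 1)" using outdeg \<open>a \<in> V\<close> by blast
  ultimately show False by simp
qed

lemma sig_in: "i < N \<Longrightarrow> \<sigma> i \<in> V" using sig by (auto simp: bij_betw_def)
lemma sig_inj: "i < N \<Longrightarrow> j < N \<Longrightarrow> \<sigma> i = \<sigma> j \<Longrightarrow> i = j"
  using sig by (auto simp: bij_betw_def inj_on_def)

definition idx :: "'v \<Rightarrow> nat" where "idx a = inv_into {..<N} \<sigma> a"

lemma idx_lt: "a \<in> V \<Longrightarrow> idx a < N"
  unfolding idx_def using sig
  by (metis bij_betw_def inv_into_into lessThan_iff)
lemma sig_idx: "a \<in> V \<Longrightarrow> \<sigma> (idx a) = a"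
  unfolding idx_def using sig by (metis bij_betw_def f_inv_into_f)
lemma idx_sig: "i < N \<Longrightarrow> idx (\<sigma> i) = i"
  using idx_lt sig_idx sig_in sig_inj by metis

lemma pn0: "pn c e 0 = T c (fst e) (outl (fst e) e)"
  by (simp add: pnode_def)
lemma pnend: "pn c e (Suc (2 * l)) = T c (snd e) (inl (snd e) e)"
  by (simp add: pnode_def)
lemma pnmid: "1 \<le> j \<Longrightarrow> j \<le> 2 * l \<Longrightarrow> pn c e j = P (c \<or> j = l \<or> j = Suc l) e j"
  by (auto simp: pnode_def)

lemma pn_eq_T: "j \<le> Suc (2 * l) \<Longrightarrow> pn c e j = T c' a xs \<longleftrightarrow>
   (j = 0 \<and> c' = c \<and> a = fst e \<and> xs = outl (fst e) e) \<or>
   (j = Suc (2 * l) \<and> c' = c \<and> a = snd e \<and> xs = inl (snd e) e)"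
  using l2 by (auto simp: pnode_def)

lemma pn_eq_P: "pn c e j = P c' e' j' \<longleftrightarrow>
   (j \<noteq> 0 \<and> j \<noteq> Suc (2 * l) \<and> e' = e \<and> j' = j \<and> c' = (c \<or> j = l \<or> j = Suc l))"
  by (auto simp: pnode_def)

lemma pn_neq_Q: "pn c e j \<noteq> Q a i"
  by (auto simp: pnode_def)

lemma qn0: "qnode a 0 = T True a []" by (simp add: qnode_def)
lemma qnS: "i \<noteq> 0 \<Longrightarrow> qnode a i = Q a i" by (simp add: qnode_def)
lemma qn_eq_T: "qnode a i = T c b xs \<longleftrightarrow> i = 0 \<and> c \<and> b = a \<and> xs = []"
  by (auto simp: qnode_def)
lemma qn_eq_Q: "qnode a i = Q b i' \<longleftrightarrow> i \<noteq> 0 \<and> b = a \<and> i' = i"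
  by (auto simp: qnode_def)
lemma qn_neq_P: "qnode a i \<noteq> P c e j"
  by (auto simp: qnode_def)

lemma E_iff: "(x, y) \<in> Hedges s l m V A inl outl \<sigma> \<longleftrightarrow>
   (\<exists>c a xs b. x = T c a xs \<and> y = T c a (xs @ [b]) \<and> a \<in> V \<and> length xs < s) \<or>
   (\<exists>c e j. x = pn c e j \<and> y = pn c e (Suc j) \<and> e \<in> A \<and> j \<le> 2 * l) \<or>
   (\<exists>a i. x = qnode a i \<and> y = qnode a (Suc i) \<and> a \<in> V \<and> i < m) \<or>
   (\<exists>i. x = Q (\<sigma> i) m \<and> y = Q (\<sigma> (Suc i mod N)) m \<and> i < N)"
  unfolding Hedges_def by auto

lemma adj_iff: "adj x y \<longleftrightarrow> (x, y) \<in> Hedges s l m V A inl outl \<sigma> \<or> (y, x) \<in> Hedges s l m V A inl outl \<sigma>"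
  unfolding adj_def Hadj_def by simp


lemma T_eq_pn: "j \<le> Suc (2 * l) \<Longrightarrow> T c' a xs = pn c e j \<longleftrightarrow>
   (j = 0 \<and> c' = c \<and> a = fst e \<and> xs = outl (fst e) e) \<or>
   (j = Suc (2 * l) \<and> c' = c \<and> a = snd e \<and> xs = inl (snd e) e)"
  using l2 by (auto simp: pnode_def)
lemma P_eq_pn: "P c' e' j' = pn c e j \<longleftrightarrow>
   (j \<noteq> 0 \<and> j \<noteq> Suc (2 * l) \<and> e' = e \<and> j' = j \<and> c' = (c \<or> j = l \<or> j = Suc l))"
  by (auto simp: pnode_def)
lemma Q_neq_pn: "Q a i \<noteq> pn c e j" by (auto simp: pnode_def)
lemma T_eq_qn: "T c b xs = qnode a i \<longleftrightarrow> i = 0 \<and> c \<and> b = a \<and> xs = []"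
  by (auto simp: qnode_def)
lemma Q_eq_qn: "Q b i' = qnode a i \<longleftrightarrow> i \<noteq> 0 \<and> b = a \<and> i' = i"
  by (auto simp: qnode_def)
lemma P_neq_qn: "P c e j \<noteq> qnode a i" by (auto simp: qnode_def)

lemmas eqs = pn_eq_T T_eq_pn pn_eq_P P_eq_pn pn_neq_Q Q_neq_pn qn_eq_T T_eq_qn qn_eq_Q Q_eq_qn
  qn_neq_P P_neq_qn

lemma VV_T: "T c a xs \<in> VV \<longleftrightarrow> a \<in> V \<and> length xs \<le> s"
  unfolding VV_def Hverts_def by auto
lemma VV_P: "P c e j \<in> VV \<longleftrightarrow> e \<in> A \<and> 1 \<le> j \<and> j \<le> 2 * l \<and> ((j = l \<or> j = Suc l) \<longrightarrow> c)"
  unfolding VV_def Hverts_def by (cases e) auto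
lemma VV_Q: "Q a i \<in> VV \<longleftrightarrow> a \<in> V \<and> 1 \<le> i \<and> i \<le> m"
  unfolding VV_def Hverts_def by auto
lemmas VV_simps = VV_T VV_P VV_Q

lemma pn_VV: "e \<in> A \<Longrightarrow> j \<le> Suc (2 * l) \<Longrightarrow> pn c e j \<in> VV"
proof -
  assume e: "e \<in> A" and j: "j \<le> Suc (2 * l)"
  show ?thesis
  proof (cases "j = 0 \<or> j = Suc (2 * l)")
    case True
    then show ?thesis by (elim disjE) (simp_all add: pn0 pnend VV_T A_V[OF e] outl_len[OF e] inl_len[OF e])
  next
    case False
    then show ?thesis using e j by (simp add: pnmid VV_P)
  qed
qed

lemma qn_VV: "a \<in> V \<Longrightarrow> i \<le> m \<Longrightarrow> qnode a i \<in> VV"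
  by (cases "i = 0") (auto simp: qn0 qnS VV_simps)

lemma E_VV: "(x, y) \<in> Hedges s l m V A inl outl \<sigma> \<Longrightarrow> x \<in> VV \<and> y \<in> VV"
  unfolding E_iff
  apply (elim disjE exE conjE)
  subgoal by (simp add: VV_simps)
  subgoal by (simp add: pn_VV)
  subgoal by (simp add: qn_VV)
  subgoal using sig_in m1 N1 by (simp add: VV_simps)
  done

lemma adj_VV: "adj x y \<Longrightarrow> x \<in> VV \<and> y \<in> VV"
  unfolding adj_iff using E_VV by blast

lemma nbr_T: assumes "adj (T c a ys) w"
  shows "(ys \<noteq> [] \<and> w = T c a (butlast ys)) \<or> (\<exists>b. w = T c a (ys @ [b]) \<and> length ys < s) \<or>
    (c \<and> ys = [] \<and> w = Q a 1) \<or>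
    (\<exists>e. e \<in> A \<and> fst e = a \<and> ys = outl a e \<and> w = pn c e 1) \<or>
    (\<exists>e. e \<in> A \<and> snd e = a \<and> ys = inl a e \<and> w = pn c e (2 * l))"
  using assms m1 unfolding adj_iff E_iff
  apply (elim disjE exE conjE)
  apply (simp_all add: eqs qnS)
  apply (metis prod.collapse)+
  done

lemma nbr_Q: assumes "adj (Q a i) w"
  shows "(1 \<le> i \<and> w = qnode a (i - 1)) \<or> (i < m \<and> w = Q a (Suc i)) \<or>
    (i = m \<and> (\<exists>j. j < N \<and> a = \<sigma> j \<and> (w = Q (\<sigma> (Suc j mod N)) m \<or>
        (\<exists>j'. j' < N \<and> w = Q (\<sigma> j') m \<and> Suc j' mod N = j))))"
  using assms unfolding adj_iff E_iff
  apply (elim disjE exE conjE)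
  apply (simp_all add: eqs qnS)
  apply blast
  subgoal for ia
    by (rule disjI2, rule exI[of _ "Suc ia mod N"]) (simp add: mod_less_divisor, blast)
  done

lemma nbr_P: assumes "adj (P c e j) w"
  shows "\<exists>c'. c = (c' \<or> j = l \<or> j = Suc l) \<and> e \<in> A \<and> 1 \<le> j \<and> j \<le> 2 * l \<and>
     (w = pn c' e (Suc j) \<or> w = pn c' e (j - 1))"
  using assms unfolding adj_iff E_iff
  apply (elim disjE exE conjE)
  apply (simp_all add: eqs)
  apply blast+
  done

lemma adj_sym: "adj x y \<Longrightarrow> adj y x" by (auto simp: adj_iff)

lemma adjT: "a \<in> V \<Longrightarrow> length xs < s \<Longrightarrow> adj (T c a xs) (T c a (xs @ [b]))"
  unfolding adj_iff E_iff
  by (rule disjI1, rule disjI1, rule exI[of _ c], rule exI[of _ a], rule exI[of _ xs], rule exI[of _ b]) simp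
lemma adjPn: "e \<in> A \<Longrightarrow> j \<le> 2 * l \<Longrightarrow> adj (pn c e j) (pn c e (Suc j))"
  unfolding adj_iff E_iff
  by (rule disjI1, rule disjI2, rule disjI1, rule exI[of _ c], rule exI[of _ e], rule exI[of _ j]) simp
lemma adjQn: "a \<in> V \<Longrightarrow> i < m \<Longrightarrow> adj (qnode a i) (qnode a (Suc i))"
  unfolding adj_iff E_iff
  by (rule disjI1, rule disjI2, rule disjI2, rule disjI1, rule exI[of _ a], rule exI[of _ i]) simp
lemma adjC: "i < N \<Longrightarrow> adj (Q (\<sigma> i) m) (Q (\<sigma> (Suc i mod N)) m)"
  unfolding adj_iff E_iff
  by (rule disjI1, rule disjI2, rule disjI2, rule disjI2, rule exI[of _ i]) simp

lemma near_refl: "near adj x x" by (simp add: near_def)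
lemma near_sym: "near adj x y \<Longrightarrow> near adj y x" by (auto simp: near_def adj_sym)
lemma adj_near: "adj x y \<Longrightarrow> near adj x y" by (simp add: near_def)

lemma phi_pn: "j \<le> Suc (2 * l) \<Longrightarrow> phi (pn c e j) = pn True e j"
  by (auto simp: pnode_def)
lemma phi_qn: "phi (qnode a i) = qnode a i"
  by (auto simp: qnode_def)

lemma phi_adj: assumes "adj x y" shows "adj (phi x) (phi y)"
proof -
  have "adj (phi x) (phi y)" if "(x, y) \<in> Hedges s l m V A inl outl \<sigma>" for x y
    using that unfolding E_iff
    apply (elim disjE exE conjE)
    subgoal for c a xs b by (simp add: adjT)
    subgoal for c e j by (simp add: phi_pn adjPn)
    subgoal for a i by (simp add: phi_qn adjQn)
    subgoal for i by (simp add: adjC)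
    done
  then show ?thesis using assms adj_sym unfolding adj_iff by blast
qed

lemma phi_VV: "x \<in> VV \<Longrightarrow> phi x \<in> VV"
  by (cases x) (auto simp: VV_simps)
lemma phi_fix: "isG1 x \<Longrightarrow> phi x = x"
  by (cases x) auto
lemma isG1_phi: "isG1 (phi x)"
  by (cases x) auto
lemma phi_near: "rob_step adj r r' \<Longrightarrow> near adj (phi r) (phi r')"
  unfolding rob_step_def near_def using phi_adj by auto

definition dd :: "'v \<times> 'v \<Rightarrow> nat" where
  "dd e = (idx (snd e) + N - idx (fst e)) mod N"
definition DD :: "'v \<times> 'v \<Rightarrow> nat" where
  "DD e = 2 * s + 2 * m + dd e"
definition gam :: "'v \<times> 'v \<Rightarrow> nat \<Rightarrow> 'v hvert" where
  "gam e t = (if t \<le> s then T True (fst e) (take (s - t) (outl (fst e) e))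
     else if t \<le> s + m then Q (fst e) (t - s)
     else if t \<le> s + m + dd e then Q (\<sigma> ((idx (fst e) + (t - (s + m))) mod N)) m
     else if t < s + 2 * m + dd e then Q (snd e) (m - (t - (s + m + dd e)))
     else T True (snd e) (take (t - (s + 2 * m + dd e)) (inl (snd e) e)))"

lemma dd_props: assumes e: "e \<in> A"
  shows "1 \<le> dd e" "dd e < N" "(idx (fst e) + dd e) mod N = idx (snd e)"
proof -
  have a: "fst e \<in> V" and b: "snd e \<in> V" using A_V[OF e] by auto
  have ia: "idx (fst e) < N" and ib: "idx (snd e) < N" using idx_lt a b by auto
  have ne: "idx (fst e) \<noteq> idx (snd e)" using A_ne[OF e] sig_idx a b by metis
  show "dd e < N" unfolding dd_def using ia by simp
  show "(idx (fst e) + dd e) mod N = idx (snd e)"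
  proof -
    have "(idx (fst e) + dd e) mod N = (idx (fst e) + (idx (snd e) + N - idx (fst e))) mod N"
      unfolding dd_def by (simp add: mod_add_right_eq)
    also have "idx (fst e) + (idx (snd e) + N - idx (fst e)) = idx (snd e) + N" using ia by simp
    finally show ?thesis using ib by simp
  qed
  show "1 \<le> dd e"
  proof (rule ccontr)
    assume "\<not> 1 \<le> dd e"
    then have "dd e = 0" by simp
    then have "(idx (fst e) + 0) mod N = idx (snd e)" using \<open>(idx (fst e) + dd e) mod N = idx (snd e)\<close> by simp
    then show False using ia ne by simp
  qed
qed

lemma DD_le: "e \<in> A \<Longrightarrow> DD e \<le> Suc (2 * l)"
  using dd_props(2)[of e] lbig unfolding DD_def by linarith

lemma gam0: "e \<in> A \<Longrightarrow> gam e 0 = T True (fst e) (outl (fst e) e)"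
  using outl_len[of e] by (simp add: gam_def)

lemma gamD: "e \<in> A \<Longrightarrow> gam e (DD e) = T True (snd e) (inl (snd e) e)"
  using inl_len[of e] s1 m1 by (simp add: gam_def DD_def)

lemma gam_VV: assumes e: "e \<in> A" shows "gam e t \<in> VV \<and> isX (gam e t)"
proof -
  have a: "fst e \<in> V" and b: "snd e \<in> V" using A_V[OF e] by auto
  have N0: "N > 0" using N1 by simp
  have l1: "length (take (s - t) (outl (fst e) e)) \<le> s" by (simp add: outl_len[OF e])
  have l2: "length (take (t - (s + 2 * m + dd e)) (inl (snd e) e)) \<le> s" by (simp add: inl_len[OF e])
  show ?thesis
    unfolding gam_def
    apply (simp only: if_split)
    using a b m1 sig_in[OF mod_less_divisor[OF N0]] l1 l2 by (simp add: VV_simps, arith)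
qed

lemma gam_step: assumes e: "e \<in> A" and t: "t < DD e"
  shows "adj (gam e t) (gam e (Suc t))"
proof -
  define a where "a = fst e"
  define b where "b = snd e"
  define d where "d = dd e"
  define L where "L = outl a e"
  define L' where "L' = inl b e"
  have aV: "a \<in> V" and bV: "b \<in> V" using A_V[OF e] a_def b_def by auto
  have LL: "length L = s" using outl_len[OF e] L_def a_def by simp
  have LL': "length L' = s" using inl_len[OF e] L'_def b_def by simp
  have d1: "1 \<le> d" and dN: "d < N" and dmod: "(idx a + d) mod N = idx b"
    using dd_props[OF e] a_def b_def d_def by auto
  have ia: "idx a < N" using idx_lt aV by simp
  have tD: "t < 2 * s + 2 * m + d" using t d_def DD_def by simp
  have g: "gam e t' = (if t' \<le> s then T True a (take (s - t') L)
     else if t' \<le> s + m then Q a (t' - s)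
     else if t' \<le> s + m + d then Q (\<sigma> ((idx a + (t' - (s + m))) mod N)) m
     else if t' < s + 2 * m + d then Q b (m - (t' - (s + m + d)))
     else T True b (take (t' - (s + 2 * m + d)) L'))" for t'
    unfolding gam_def a_def b_def d_def L_def L'_def by simp
  consider (c1) "t < s" | (c2) "t = s" | (c3) "s < t \<and> t < s + m" | (c4) "t = s + m"
    | (c5) "s + m < t \<and> t < s + m + d" | (c6) "t = s + m + d"
    | (c7) "s + m + d < t \<and> t < s + 2 * m + d" | (c8) "s + 2 * m + d \<le> t"
    by linarith
  then show ?thesis
  proof cases
    case c1
    have tk: "take (s - t) L = take (s - Suc t) L @ [L ! (s - Suc t)]"
    proof -
      have "s - t = Suc (s - Suc t)" using c1 by simp
      moreover have "s - Suc t < length L" using c1 LL by simp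
      ultimately show ?thesis by (simp add: take_Suc_conv_app_nth)
    qed
    have "adj (T True a (take (s - Suc t) L)) (T True a (take (s - t) L))"
      using adjT[OF aV, of "take (s - Suc t) L"] c1 LL tk by simp
    then show ?thesis using c1 adj_sym by (simp add: g)
  next
    case c2
    have "adj (qnode a 0) (qnode a (Suc 0))" using adjQn[OF aV] m1 by simp
    then show ?thesis using c2 m1 by (simp add: g qn0 qnS)
  next
    case c3
    have "t - s < m" using c3 by linarith
    then have "adj (qnode a (t - s)) (qnode a (Suc (t - s)))" using adjQn[OF aV] by blast
    then show ?thesis using c3 by (simp add: g qnS Suc_diff_le)
  next
    case c4
    have "adj (Q (\<sigma> (idx a)) m) (Q (\<sigma> (Suc (idx a) mod N)) m)" using adjC ia by simp
    then show ?thesis using c4 d1 m1 sig_idx[OF aV] by (simp add: g)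
  next
    case c5
    define k where "k = t - (s + m)"
    have k: "t = s + m + k" "1 \<le> k" "k < d" using c5 k_def by auto
    have "adj (Q (\<sigma> ((idx a + k) mod N)) m) (Q (\<sigma> (Suc ((idx a + k) mod N) mod N)) m)"
      using adjC N1 by simp
    moreover have "Suc ((idx a + k) mod N) mod N = (idx a + Suc k) mod N"
      by (simp add: mod_Suc_eq)
    ultimately show ?thesis using k by (simp add: g)
  next
    case c6
    have qb: "Q (\<sigma> ((idx a + d) mod N)) m = Q b m" using dmod sig_idx[OF bV] by simp
    show ?thesis
    proof (cases "m = 1")
      case True
      have "adj (qnode b 0) (qnode b (Suc 0))" using adjQn[OF bV] m1 by simp
      then have 1: "adj (Q b m) (T True b [])" using True adj_sym by (simp add: qn0 qnS)
      have "Suc t = s + 2 * m + d" using c6 True by simp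
      then have "gam e (Suc t) = T True b []" using m1 d1 by (simp add: g)
      moreover have "gam e t = Q b m" using c6 qb d1 m1 by (simp add: g)
      ultimately show ?thesis using 1 by simp
    next
      case False
      then have m2: "m \<ge> 2" using m1 by simp
      have "adj (qnode b (m - 1)) (qnode b (Suc (m - 1)))" using adjQn[OF bV, of "m - 1"] m1 by simp
      then have "adj (Q b m) (Q b (m - 1))" using m2 adj_sym by (simp add: qnS)
      then show ?thesis using c6 m2 qb d1 by (simp add: g)
    qed
  next
    case c7
    define k where "k = t - (s + m + d)"
    have k: "t = s + m + d + k" "1 \<le> k" "k < m" using c7 k_def by auto
    show ?thesis
    proof (cases "Suc k = m")
      case True
      have "adj (qnode b 0) (qnode b (Suc 0))" using adjQn[OF bV] m1 by simp
      then have "adj (Q b 1) (T True b [])" using adj_sym by (simp add: qn0 qnS)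
      moreover have "m - k = 1" using True by simp
      ultimately show ?thesis using k True by (simp add: g)
    next
      case False
      have "adj (qnode b (m - Suc k)) (qnode b (Suc (m - Suc k)))" using adjQn[OF bV, of "m - Suc k"] k by simp
      then have "adj (Q b (m - k)) (Q b (m - Suc k))" using k False adj_sym
        by (simp add: qnS Suc_diff_Suc)
      then show ?thesis using k False by (simp add: g)
    qed
  next
    case c8
    define k where "k = t - (s + 2 * m + d)"
    have k: "t = s + 2 * m + d + k" "k < s" using c8 k_def tD by auto
    have tk: "take (Suc k) L' = take k L' @ [L' ! k]"
      using k LL' by (simp add: take_Suc_conv_app_nth)
    have "adj (T True b (take k L')) (T True b (take k L' @ [L' ! k]))"
      using adjT[OF bV] k LL' by simp
    then show ?thesis using k m1 s1 d1 tk by (simp add: g)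
  qed
qed

definition chi :: "'v hvert \<Rightarrow> 'v hvert" where
  "chi v = (case v of T c a xs \<Rightarrow> T True a xs | P c e j \<Rightarrow> gam e (min j (DD e)) | Q a i \<Rightarrow> Q a i)"

lemma chi_simps[simp]: "chi (T c a xs) = T True a xs" "chi (P c e j) = gam e (min j (DD e))"
  "chi (Q a i) = Q a i"
  by (simp_all add: chi_def)

lemma isX_gam: "isX (gam e t)" by (simp add: gam_def)
lemma isX_chi: "isX (chi x)" by (cases x) (simp_all add: isX_gam)
lemma chi_VV: "x \<in> VV \<Longrightarrow> chi x \<in> VV"
  by (cases x) (auto simp: VV_simps gam_VV)
lemma chi_phi: "chi (phi x) = chi x" by (cases x) simp_all
lemma chi_fix: "isX x \<Longrightarrow> chi x = x" by (cases x) simp_all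

lemma chi_pn: assumes e: "e \<in> A" and j: "j \<le> Suc (2 * l)"
  shows "chi (pn c e j) = gam e (min j (DD e))"
proof -
  consider "j = 0" | "j = Suc (2 * l)" | "1 \<le> j \<and> j \<le> 2 * l" using j by linarith
  then show ?thesis
  proof cases
    case 1 then show ?thesis using gam0[OF e] by (simp add: pn0)
  next
    case 2 then show ?thesis using gamD[OF e] DD_le[OF e] by (simp add: pnend min_absorb2)
  next
    case 3 then show ?thesis by (simp add: pnmid)
  qed
qed

lemma chi_qn: "chi (qnode a i) = qnode a i"
  by (simp add: qnode_def)

lemma chi_adj: assumes "adj x y" shows "near adj (chi x) (chi y)"
proof -
  have "near adj (chi x) (chi y)" if "(x, y) \<in> Hedges s l m V A inl outl \<sigma>" for x y
    using that unfolding E_iff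
    apply (elim disjE exE conjE)
    subgoal for c a xs b by (simp add: adjT adj_near)
    subgoal for c e j
    proof -
      assume h: "x = pn c e j" "y = pn c e (Suc j)" "e \<in> A" "j \<le> 2 * l"
      then have cx: "chi x = gam e (min j (DD e))" and cy: "chi y = gam e (min (Suc j) (DD e))"
        using chi_pn by auto
      show ?thesis
      proof (cases "j < DD e")
        case True
        then have "min j (DD e) = j" "min (Suc j) (DD e) = Suc j" by auto
        then show ?thesis using cx cy gam_step[OF h(3) True] adj_near by simp
      next
        case False
        then have "min j (DD e) = DD e" "min (Suc j) (DD e) = DD e" by auto
        then show ?thesis using cx cy near_refl by simp
      qed
    qed
    subgoal for a i by (simp add: chi_qn adjQn adj_near)
    subgoal for i by (simp add: adjC adj_near)
    done
  then show ?thesis using assms near_sym unfolding adj_iff by blast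
qed

lemma chi_near: "rob_step adj r r' \<Longrightarrow> near adj (chi r) (chi r')"
  unfolding rob_step_def using chi_adj near_refl by auto

definition om0 :: "'v hvert \<Rightarrow> 'v hvert" where
  "om0 v = (case v of T c a xs \<Rightarrow> Q a m | P c e j \<Rightarrow> Q (fst e) m | Q a i \<Rightarrow> Q a m)"
definition om :: "'v hvert \<Rightarrow> 'v hvert" where
  "om v = om0 (chi v)"

lemma om0_simps[simp]: "om0 (T c a xs) = Q a m" "om0 (Q a i) = Q a m"
  by (simp_all add: om0_def)
lemma om0_qn: "om0 (qnode a i) = Q a m" by (simp add: qnode_def)

lemma pn_notX: "1 \<le> j \<Longrightarrow> j \<le> 2 * l \<Longrightarrow> \<not> isX (pn c e j)"
  by (simp add: pnmid)

lemma om0_adj: assumes "adj u w" "isX u" "isX w"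
  shows "near adj (om0 u) (om0 w) \<and> (om0 u \<noteq> om0 w \<longrightarrow> (\<exists>i. i < N \<and>
     ((u = Q (\<sigma> i) m \<and> w = Q (\<sigma> (Suc i mod N)) m) \<or> (w = Q (\<sigma> i) m \<and> u = Q (\<sigma> (Suc i mod N)) m))))"
proof -
  have "near adj (om0 x) (om0 y) \<and> (om0 x \<noteq> om0 y \<longrightarrow> (\<exists>i. i < N \<and> x = Q (\<sigma> i) m \<and> y = Q (\<sigma> (Suc i mod N)) m))"
    if "(x, y) \<in> Hedges s l m V A inl outl \<sigma>" "isX x" "isX y" for x y
    using that unfolding E_iff
    apply (elim disjE exE conjE)
    subgoal for c a xs b by (simp add: near_refl)
    subgoal for c e j
    proof -
      assume h: "x = pn c e j" "y = pn c e (Suc j)" "e \<in> A" "j \<le> 2 * l" "isX x" "isX y"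
      show ?thesis
      proof (cases "j = 0")
        case True
        then have "\<not> isX y" using h l2 pn_notX[of "Suc j"] by simp
        then show ?thesis using h by simp
      next
        case False
        then have "\<not> isX x" using h pn_notX[of j] by simp
        then show ?thesis using h by simp
      qed
    qed
    subgoal for a i by (simp add: om0_qn near_refl)
    subgoal for i by (simp add: adjC adj_near, blast)
    done
  note H = this
  from assms(1) have "(u, w) \<in> Hedges s l m V A inl outl \<sigma> \<or> (w, u) \<in> Hedges s l m V A inl outl \<sigma>"
    by (simp add: adj_iff)
  then show ?thesis
  proof
    assume "(u, w) \<in> Hedges s l m V A inl outl \<sigma>"
    from H[OF this assms(2,3)] show ?thesis by blast
  next
    assume "(w, u) \<in> Hedges s l m V A inl outl \<sigma>"
    from H[OF this assms(3,2)] show ?thesis using near_sym by metis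
  qed
qed

lemma om_near: "rob_step adj r r' \<Longrightarrow> near adj (om r) (om r')"
proof -
  assume "rob_step adj r r'"
  then have "near adj (chi r) (chi r')" by (rule chi_near)
  then have "chi r' = chi r \<or> adj (chi r) (chi r')" by (simp add: near_def)
  then show ?thesis
  proof
    assume "chi r' = chi r" then show ?thesis by (simp add: om_def near_refl)
  next
    assume "adj (chi r) (chi r')"
    from om0_adj[OF this isX_chi isX_chi] show ?thesis unfolding om_def by blast
  qed
qed

end


context G5
begin

abbreviation "q0 \<equiv> Q (\<sigma> 0) m"

lemma rt_sym: "(adj\<^sup>*\<^sup>*) x y \<Longrightarrow> (adj\<^sup>*\<^sup>*) y x"
proof (induction rule: rtranclp_induct)
  case base then show ?case by simp
next
  case (step y z) then show ?case using adj_sym by (meson converse_rtranclp_into_rtranclp)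
qed

lemma walkT: "a \<in> V \<Longrightarrow> length xs \<le> s \<Longrightarrow> (adj\<^sup>*\<^sup>*) (T c a xs) (T c a [])"
proof (induction xs rule: rev_induct)
  case Nil then show ?case by simp
next
  case (snoc x xs)
  then have "adj (T c a (xs @ [x])) (T c a xs)" using adjT adj_sym by simp
  then show ?case using snoc by (simp add: converse_rtranclp_into_rtranclp)
qed

lemma walkQ: "a \<in> V \<Longrightarrow> j \<le> m \<Longrightarrow> i \<le> j \<Longrightarrow> (adj\<^sup>*\<^sup>*) (qnode a i) (qnode a j)"
proof (induction j)
  case 0 then show ?case by simp
next
  case (Suc j)
  show ?case
  proof (cases "i = Suc j")
    case True then show ?thesis by simp
  next
    case False
    then have "(adj\<^sup>*\<^sup>*) (qnode a i) (qnode a j)" using Suc by simp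
    moreover have "adj (qnode a j) (qnode a (Suc j))" using adjQn Suc by simp
    ultimately show ?thesis by (simp add: rtranclp.rtrancl_into_rtrancl)
  qed
qed

lemma walkC: "i < N \<Longrightarrow> (adj\<^sup>*\<^sup>*) (Q (\<sigma> i) m) q0"
proof (induction i)
  case 0 then show ?case by simp
next
  case (Suc i)
  have i: "i < N" using Suc by simp
  have "adj (Q (\<sigma> i) m) (Q (\<sigma> (Suc i mod N)) m)" by (rule adjC[OF i])
  moreover have "Suc i mod N = Suc i" using Suc by simp
  ultimately have "adj (Q (\<sigma> i) m) (Q (\<sigma> (Suc i)) m)" by simp
  then have "adj (Q (\<sigma> (Suc i)) m) (Q (\<sigma> i) m)" using Suc adj_sym by simp
  then show ?case using Suc by (simp add: converse_rtranclp_into_rtranclp)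
qed

lemma walkP: "e \<in> A \<Longrightarrow> j \<le> Suc (2 * l) \<Longrightarrow> (adj\<^sup>*\<^sup>*) (pn c e j) (pn c e 0)"
proof (induction j)
  case 0 then show ?case by simp
next
  case (Suc j)
  have "adj (pn c e j) (pn c e (Suc j))" using adjPn Suc by simp
  then have "adj (pn c e (Suc j)) (pn c e j)" using adj_sym by blast
  moreover have "(adj\<^sup>*\<^sup>*) (pn c e j) (pn c e 0)" using Suc by simp
  ultimately show ?case by (rule converse_rtranclp_into_rtranclp)
qed

lemma walk_root: "a \<in> V \<Longrightarrow> (adj\<^sup>*\<^sup>*) (T True a []) q0"
proof -
  assume a: "a \<in> V"
  have "(adj\<^sup>*\<^sup>*) (qnode a 0) (qnode a m)" using walkQ a by simp
  then have 1: "(adj\<^sup>*\<^sup>*) (T True a []) (Q a m)" using m1 by (simp add: qn0 qnS)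
  have "(adj\<^sup>*\<^sup>*) (Q (\<sigma> (idx a)) m) q0" using walkC idx_lt a by simp
  then show ?thesis using 1 sig_idx a by simp
qed

lemma walk_root2: "a \<in> V \<Longrightarrow> (adj\<^sup>*\<^sup>*) (T False a []) q0"
proof -
  assume a: "a \<in> V"
  obtain b where ab: "(a, b) \<in> A" using out_exists a by blast
  define e where "e = (a, b)"
  have e: "e \<in> A" using ab e_def by simp
  have L: "length (outl a e) = s" using outl_len[OF e] e_def by simp
  have 1: "(adj\<^sup>*\<^sup>*) (T False a []) (pn False e 0)"
    using rt_sym[OF walkT[OF a, of "outl a e" False]] L e_def by (simp add: pn0)
  have 2: "(adj\<^sup>*\<^sup>*) (pn False e 0) (pn False e l)"
    using rt_sym[OF walkP[OF e, of l False]] by simp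
  have "pn False e l = pn True e l" using l2 by (simp add: pnmid)
  moreover have "(adj\<^sup>*\<^sup>*) (pn True e l) (pn True e 0)" using walkP[OF e, of l True] by simp
  moreover have "(adj\<^sup>*\<^sup>*) (pn True e 0) (T True a [])"
    using walkT[OF a, of "outl a e" True] L e_def by (simp add: pn0)
  ultimately show ?thesis using 1 2 walk_root[OF a] by (metis rtranclp_trans)
qed

lemma walk_q0: "x \<in> VV \<Longrightarrow> (adj\<^sup>*\<^sup>*) x q0"
proof (cases x)
  case (T c a xs)
  assume "x \<in> VV"
  then have a: "a \<in> V" and xs: "length xs \<le> s" using T by (auto simp: VV_simps)
  have "(adj\<^sup>*\<^sup>*) (T c a xs) (T c a [])" using walkT a xs by simp
  moreover have "(adj\<^sup>*\<^sup>*) (T c a []) q0" using walk_root walk_root2 a by (cases c) auto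
  ultimately show ?thesis using T by (metis rtranclp_trans)
next
  case (P c e j)
  assume "x \<in> VV"
  then have e: "e \<in> A" and j: "1 \<le> j" "j \<le> 2 * l" and cc: "(j = l \<or> j = Suc l) \<longrightarrow> c"
    using P by (auto simp: VV_simps)
  have "x = pn c e j" using P j cc by (auto simp: pnmid)
  moreover have "(adj\<^sup>*\<^sup>*) (pn c e j) (pn c e 0)" using walkP e j by simp
  moreover have "(adj\<^sup>*\<^sup>*) (pn c e 0) q0"
  proof -
    have a: "fst e \<in> V" using A_V e by simp
    have "(adj\<^sup>*\<^sup>*) (pn c e 0) (T c (fst e) [])"
      using walkT[OF a, of "outl (fst e) e" c] outl_len[OF e] by (simp add: pn0)
    moreover have "(adj\<^sup>*\<^sup>*) (T c (fst e) []) q0" using walk_root walk_root2 a by (cases c) auto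
    ultimately show ?thesis by (metis rtranclp_trans)
  qed
  ultimately show ?thesis by (metis rtranclp_trans)
next
  case (Q a i)
  assume "x \<in> VV"
  then have a: "a \<in> V" and i: "1 \<le> i" "i \<le> m" using Q by (auto simp: VV_simps)
  have "(adj\<^sup>*\<^sup>*) (qnode a i) (qnode a m)" using walkQ a i by simp
  then have "(adj\<^sup>*\<^sup>*) (Q a i) (Q a m)" using i m1 by (simp add: qnS)
  moreover have "(adj\<^sup>*\<^sup>*) (Q (\<sigma> (idx a)) m) q0" using walkC idx_lt a by simp
  ultimately show ?thesis using Q sig_idx a by (metis rtranclp_trans)
qed

lemma conn: "x \<in> VV \<Longrightarrow> y \<in> VV \<Longrightarrow> (adj\<^sup>*\<^sup>*) x y"
  using walk_q0 rt_sym by (metis rtranclp_trans)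

lemma walk_VV: "(adj\<^sup>*\<^sup>*) x y \<Longrightarrow> y \<in> VV \<Longrightarrow> x \<in> VV"
  by (induction rule: converse_rtranclp_induct) (auto dest: adj_VV)

lemma q0_VV: "q0 \<in> VV" using sig_in N1 m1 by (simp add: VV_simps)

lemma rob_VV: "rob_step adj r r' \<Longrightarrow> r \<in> VV \<Longrightarrow> r' \<in> VV"
  unfolding rob_step_def using adj_VV by auto

lemma near_VV: "near adj x y \<Longrightarrow> y \<in> VV \<Longrightarrow> x \<in> VV"
  unfolding near_def using adj_VV by auto
lemma near_VV2: "near adj x y \<Longrightarrow> x \<in> VV \<Longrightarrow> y \<in> VV"
  unfolding near_def using adj_VV by auto

definition Gl :: "('v hvert \<Rightarrow> 'v hvert) \<Rightarrow> 'v hvert \<Rightarrow> 'v hvert \<Rightarrow> 'v hvert \<Rightarrow> bool" where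
  "Gl h p1 p2 r \<longleftrightarrow> p1 \<in> VV \<and> p2 \<in> VV \<and> r \<in> VV \<and>
    (near adj p1 (h r) \<or> near adj p2 (h r) \<or> near adj p1 r \<or> near adj p2 r)"

lemma Gl_sym: "(\<lambda>a b. Gl h b a) = Gl h"
  by (intro ext) (auto simp: Gl_def)

lemma phase_trans:
  assumes H: "\<And>p1 p2 r. p1 \<in> VV \<Longrightarrow> p2 \<in> VV \<Longrightarrow> r \<in> VV \<Longrightarrow> near adj p1 (h r) \<Longrightarrow>
     Reach adj (Gl h') p1 p2 r"
    and G: "Gl h p1 p2 r"
  shows "Reach adj (Gl h') p1 p2 r"
proof -
  have ok: "p1 \<in> VV" "p2 \<in> VV" "r \<in> VV" using G by (auto simp: Gl_def)
  from G consider "near adj p1 (h r)" | "near adj p2 (h r)" | "near adj p1 r \<or> near adj p2 r"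
    unfolding Gl_def by blast
  then show ?thesis
  proof cases
    case 1 then show ?thesis using H ok by blast
  next
    case 2
    then have "Reach adj (Gl h') p2 p1 r" using H ok by blast
    then have "Reach adj (\<lambda>a b. Gl h' b a) p1 p2 r" by (rule Reach_swap)
    then show ?thesis using Gl_sym by metis
  next
    case 3 then show ?thesis using ok by (intro Reach.base) (auto simp: Gl_def)
  qed
qed

lemma final:
  assumes "Gl id p1 p2 r"
  shows "Reach adj (\<lambda>_ _ _. False) p1 p2 r"
proof -
  from assms have "near adj p1 r \<or> near adj p2 r" by (auto simp: Gl_def)
  then show ?thesis
  proof
    assume "near adj p1 r"
    then show ?thesis by (intro Reach.step[of adj p1 r p2 p2]) (auto simp: near_refl)
  next
    assume "near adj p2 r"
    then show ?thesis by (intro Reach.step[of adj p1 p1 p2 r]) (auto simp: near_refl)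
  qed
qed

lemma om_form: assumes "r \<in> VV" shows "\<exists>j<N. om r = Q (\<sigma> j) m"
proof -
  have c: "chi r \<in> VV" "isX (chi r)" using chi_VV assms isX_chi by auto
  obtain a where a: "a \<in> V" "om r = Q a m"
  proof (cases "chi r")
    case (T c a xs) then show ?thesis using that c by (auto simp: om_def VV_simps)
  next
    case (P c e j) then show ?thesis using c by simp
  next
    case (Q a i) then show ?thesis using that c by (auto simp: om_def VV_simps)
  qed
  then show ?thesis using idx_lt sig_idx by metis
qed

lemma C_adj: assumes "i < N" "j < N" "adj (Q (\<sigma> i) m) (Q (\<sigma> j) m)"
  shows "j = Suc i mod N \<or> i = Suc j mod N"
proof -
  from nbr_Q[OF assms(3)] m1 have "\<exists>j0<N. \<sigma> i = \<sigma> j0 \<and> (Q (\<sigma> j) m = Q (\<sigma> (Suc j0 mod N)) m \<or>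
        (\<exists>j'. j' < N \<and> Q (\<sigma> j) m = Q (\<sigma> j') m \<and> Suc j' mod N = j0))"
    by (auto simp: qnode_def split: if_splits)
  then obtain j0 where j0: "j0 < N" "\<sigma> i = \<sigma> j0" and
    h: "\<sigma> j = \<sigma> (Suc j0 mod N) \<or> (\<exists>j'. j' < N \<and> \<sigma> j = \<sigma> j' \<and> Suc j' mod N = j0)" by auto
  have "j0 = i" using sig_inj j0 assms(1) by metis
  have sm: "Suc i mod N < N" using assms(1) by simp
  from h show ?thesis
  proof
    assume "\<sigma> j = \<sigma> (Suc j0 mod N)"
    then show ?thesis using sig_inj[OF assms(2) sm] \<open>j0 = i\<close> by simp
  next
    assume "\<exists>j'. j' < N \<and> \<sigma> j = \<sigma> j' \<and> Suc j' mod N = j0"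
    then obtain j' where "j' < N" "\<sigma> j = \<sigma> j'" "Suc j' mod N = j0" by blast
    then show ?thesis using sig_inj[OF assms(2)] \<open>j0 = i\<close> by metis
  qed
qed

definition cidx :: "'v hvert \<Rightarrow> nat" where
  "cidx v = (case v of Q a i \<Rightarrow> idx a | _ \<Rightarrow> 0)"

lemma ph1: assumes r: "r \<in> VV" shows "Reach adj (Gl om) q0 q0 r"
proof -
  obtain j where j: "j < N" "om r = Q (\<sigma> j) m" using om_form r by blast
  show ?thesis
  proof (cases "j = 0")
    case True
    then show ?thesis using j r q0_VV by (intro Reach.base) (simp add: Gl_def near_refl)
  next
    case False
    define S where "S = (\<lambda>p1 p2 r. p1 = q0 \<and> r \<in> VV \<and>
       (\<exists>i j. p2 = Q (\<sigma> i) m \<and> om r = Q (\<sigma> j) m \<and> i < j \<and> j < N))"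
    define \<mu> where "\<mu> = (\<lambda>(p1::'v hvert) (p2::'v hvert) (r::'v hvert). N - cidx p2)"
    have S0: "S q0 q0 r" unfolding S_def using r j False by auto
    show ?thesis
    proof (rule Reach_measure[of S, OF S0])
      fix p1 p2 r
      assume S: "S p1 p2 r" and nG: "\<not> Gl om p1 p2 r"
      from S obtain i j where p1: "p1 = q0" and r: "r \<in> VV" and p2: "p2 = Q (\<sigma> i) m"
        and oj: "om r = Q (\<sigma> j) m" and ij: "i < j" "j < N"
        unfolding S_def by blast
      have iN: "i < N" using ij by simp
      have p2V: "p2 \<in> VV" using p2 sig_in iN m1 by (simp add: VV_simps)
      have nn: "\<not> near adj q0 (om r)" "\<not> near adj p2 (om r)"
        using nG p1 p2V r q0_VV unfolding Gl_def by auto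
      have "j \<noteq> Suc i"
      proof
        assume "j = Suc i"
        then have "adj p2 (om r)" using adjC[OF iN] p2 oj ij by simp
        then show False using nn adj_near by blast
      qed
      then have sij: "Suc i < j" using ij by simp
      have jN1: "Suc j \<noteq> N"
      proof
        assume h: "Suc j = N"
        then have "adj (om r) q0" using adjC[OF ij(2)] oj by simp
        then show False using nn adj_near adj_sym by blast
      qed
      have sN: "Suc i mod N = Suc i" using sij ij by simp
      define p2' where "p2' = Q (\<sigma> (Suc i)) m"
      have np2: "near adj p2 p2'" using adjC[OF iN] sN p2 p2'_def adj_near by simp
      have p2'V: "p2' \<in> VV" using p2'_def sig_in sij ij m1 by (simp add: VV_simps)
      show "\<exists>p1' p2'. near adj p1 p1' \<and> near adj p2 p2' \<and> (r = p1' \<or> r = p2' \<or>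
        (\<forall>r'. rob_step adj r r' \<longrightarrow> Gl om p1' p2' r' \<or> r' = p1' \<or> r' = p2' \<or>
            (S p1' p2' r' \<and> \<mu> p1' p2' r' < \<mu> p1 p2 r)))"
      proof -
      have step: "\<forall>r'. rob_step adj r r' \<longrightarrow> Gl om q0 p2' r' \<or> r' = q0 \<or> r' = p2' \<or>
            (S q0 p2' r' \<and> \<mu> q0 p2' r' < \<mu> p1 p2 r)"
      proof (intro allI impI)
        fix r' assume rs: "rob_step adj r r'"
        have r'V: "r' \<in> VV" using rob_VV rs r by blast
        obtain j' where j': "j' < N" "om r' = Q (\<sigma> j') m" using om_form r'V by blast
        have nr: "near adj (om r) (om r')" using om_near rs by blast
        have jj: "j' = j \<or> j' = Suc j \<or> Suc j' = j"
        proof (cases "om r' = om r")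
          case True then have "j' = j" using j' oj sig_inj ij by simp
          then show ?thesis by simp
        next
          case False
          then have "adj (Q (\<sigma> j) m) (Q (\<sigma> j') m)" using nr oj j' by (simp add: near_def)
          from C_adj[OF ij(2) j'(1) this] show ?thesis
          proof
            assume "j' = Suc j mod N" then show ?thesis using jN1 ij by simp
          next
            assume h: "j = Suc j' mod N"
            show ?thesis
            proof (cases "Suc j' = N")
              case True then show ?thesis using h sij by simp
            next
              case False then show ?thesis using h j' by simp
            qed
          qed
        qed
        then have ge: "Suc i \<le> j'" using sij by auto
        show "Gl om q0 p2' r' \<or> r' = q0 \<or> r' = p2' \<or> (S q0 p2' r' \<and> \<mu> q0 p2' r' < \<mu> p1 p2 r)"
        proof (cases "j' = Suc i")
          case True
          then have "om r' = p2'" using j' p2'_def by simp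
          then show ?thesis using q0_VV p2'V r'V near_refl by (simp add: Gl_def)
        next
          case False
          then have "Suc i < j'" using ge by simp
          then have "S q0 p2' r'" unfolding S_def using r'V j' p2'_def by blast
          moreover have "\<mu> q0 p2' r' < \<mu> p1 p2 r"
            unfolding \<mu>_def cidx_def using p2 p2'_def idx_sig iN sij ij by simp
          ultimately show ?thesis by blast
        qed
      qed
      have "near adj p1 q0" using p1 near_refl by simp
      then show ?thesis using np2 step by blast
      qed
    qed
  qed
qed

definition isC :: "'v hvert \<Rightarrow> bool" where "isC v \<longleftrightarrow> (\<exists>a. v = Q a m)"

definition anc1 :: "'v hvert \<Rightarrow> 'v hvert \<Rightarrow> bool" where
  "anc1 u v = (case u of Q a i \<Rightarrow> (case v of Q b i' \<Rightarrow> b = a \<and> i' \<le> i | T c b ys \<Rightarrow> c \<and> b = a | P _ _ _ \<Rightarrow> False)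
     | T c a xs \<Rightarrow> (case v of T c' b ys \<Rightarrow> c' = c \<and> b = a \<and> prefix xs ys | _ \<Rightarrow> False)
     | P _ _ _ \<Rightarrow> False)"
definition lev1 :: "'v hvert \<Rightarrow> nat" where
  "lev1 v = (case v of Q a i \<Rightarrow> m - i | T c a xs \<Rightarrow> m + length xs | P _ _ _ \<Rightarrow> 0)"
definition nxt1 :: "'v hvert \<Rightarrow> 'v hvert \<Rightarrow> 'v hvert" where
  "nxt1 u v = (case u of Q a i \<Rightarrow> qnode a (i - 1)
     | T c a xs \<Rightarrow> (case v of T _ _ ys \<Rightarrow> T c a (take (Suc (length xs)) ys) | _ \<Rightarrow> u) | _ \<Rightarrow> u)"

lemma anc1_simps[simp]:
  "anc1 (Q a i) (Q b i') \<longleftrightarrow> b = a \<and> i' \<le> i"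
  "anc1 (Q a i) (T c b ys) \<longleftrightarrow> c \<and> b = a"
  "anc1 (Q a i) (P c e j) \<longleftrightarrow> False"
  "anc1 (T c a xs) (T c' b ys) \<longleftrightarrow> c' = c \<and> b = a \<and> prefix xs ys"
  "anc1 (T c a xs) (Q b i) \<longleftrightarrow> False"
  "anc1 (T c a xs) (P c' e j) \<longleftrightarrow> False"
  "anc1 (P c e j) v \<longleftrightarrow> False"
  by (simp_all add: anc1_def)

lemma lev1_simps[simp]: "lev1 (Q a i) = m - i" "lev1 (T c a xs) = m + length xs"
  by (simp_all add: lev1_def)

lemma prefix_butlast': assumes "prefix xs ys" "xs \<noteq> ys" shows "prefix xs (butlast ys)"
proof -
  obtain zs where ys: "ys = xs @ zs" using assms(1) prefixE by blast
  then have "zs \<noteq> []" using assms(2) by auto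
  then have "butlast ys = xs @ butlast zs" using ys by (simp add: butlast_append)
  then show ?thesis by simp
qed

lemma take_Suc_prefix: assumes "prefix xs ys" "length xs < length ys"
  shows "take (Suc (length xs)) ys = xs @ [ys ! length xs]"
proof -
  obtain zs where ys: "ys = xs @ zs" using assms(1) prefixE by blast
  have "take (Suc (length xs)) ys = take (length xs) ys @ [ys ! length xs]"
    using assms(2) by (simp add: take_Suc_conv_app_nth)
  then show ?thesis using ys by simp
qed

lemma tree1:
  assumes anc: "anc1 u v" and ne: "u \<noteq> v" and uV: "u \<in> VV" and vV: "v \<in> VV" and xv: "isX v"
    and a: "adj v w" and xw: "isX w" and cw: "\<not> isC w"
  shows "anc1 u w"
proof (cases v)
  case (T c a' ys)
  have c: c using xv T by simp
  show ?thesis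
  proof (cases u)
    case (T c0 a xs)
    have h: "c0 = c" "a' = a" "prefix xs ys" "xs \<noteq> ys" using anc ne T \<open>v = _\<close> by auto
    from a \<open>v = _\<close> have "adj (T c a' ys) w" by simp
    from nbr_T[OF this] show ?thesis
    proof (elim disjE exE conjE)
      assume "ys \<noteq> []" "w = T c a' (butlast ys)"
      then show ?thesis using h T prefix_butlast' by simp
    next
      fix b assume "w = T c a' (ys @ [b])" "length ys < s"
      then show ?thesis using h T by (simp add: prefix_snoc)
    next
      assume "c" "ys = []" "w = Q a' 1"
      then show ?thesis using h by simp
    next
      fix e assume "w = pn c e 1" then show ?thesis using xw l2 pn_notX[of 1] by simp
    next
      fix e assume "w = pn c e (2 * l)" then show ?thesis using xw l2 pn_notX[of "2 * l"] by simp
    qed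
  next
    case (Q a i)
    have h: "a' = a" using anc \<open>v = _\<close> Q by simp
    have i1: "1 \<le> i" using uV Q by (simp add: VV_simps)
    from a \<open>v = _\<close> have "adj (T c a' ys) w" by simp
    from nbr_T[OF this] show ?thesis
    proof (elim disjE exE conjE)
      assume "ys \<noteq> []" "w = T c a' (butlast ys)"
      then show ?thesis using h Q c by simp
    next
      fix b assume "w = T c a' (ys @ [b])" "length ys < s"
      then show ?thesis using h Q c by simp
    next
      assume "c" "ys = []" "w = Q a' 1"
      then show ?thesis using h Q i1 by simp
    next
      fix e assume "w = pn c e 1" then show ?thesis using xw l2 pn_notX[of 1] by simp
    next
      fix e assume "w = pn c e (2 * l)" then show ?thesis using xw l2 pn_notX[of "2 * l"] by simp
    qed
  next
    case (P c e j) then show ?thesis using anc by simp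
  qed
next
  case (P c e j) then show ?thesis using xv by simp
next
  case (Q a' i')
  obtain a i where u: "u = Q a i" and h: "a' = a" "i' < i"
    using anc ne Q by (cases u) auto
  have im: "i \<le> m" using uV u by (simp add: VV_simps)
  from a Q have "adj (Q a' i') w" by simp
  from nbr_Q[OF this] show ?thesis
  proof (elim disjE conjE)
    assume "1 \<le> i'" "w = qnode a' (i' - 1)"
    then show ?thesis using h u by (cases "i' - 1 = 0") (auto simp: qnode_def)
  next
    assume "i' < m" "w = Q a' (Suc i')"
    then show ?thesis using h u by simp
  next
    assume "i' = m" then show ?thesis using h im by simp
  qed
qed

lemma nxt1_props:
  assumes anc: "anc1 u v" and ne: "u \<noteq> v" and uV: "u \<in> VV" and vV: "v \<in> VV"
    and xu: "isX u" and xv: "isX v"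
  shows "adj u (nxt1 u v) \<and> anc1 (nxt1 u v) v \<and> isX (nxt1 u v) \<and>
    lev1 (nxt1 u v) = Suc (lev1 u) \<and> lev1 (nxt1 u v) \<le> lev1 v \<and> lev1 v \<le> m + s"
proof (cases u)
  case (Q a i)
  have aV: "a \<in> V" and i: "1 \<le> i" "i \<le> m" using uV Q by (auto simp: VV_simps)
  have nx: "nxt1 u v = qnode a (i - 1)" using Q by (simp add: nxt1_def)
  have ad: "adj u (qnode a (i - 1))"
  proof -
    have "adj (qnode a (i - 1)) (qnode a (Suc (i - 1)))" using adjQn[OF aV, of "i - 1"] i by simp
    then show ?thesis using Q i adj_sym by (simp add: qnS)
  qed
  show ?thesis
  proof (cases v)
    case (T c b ys)
    have "c" "b = a" using anc Q T by auto
    moreover have "length ys \<le> s" using vV T by (simp add: VV_simps)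
    ultimately show ?thesis using nx ad Q T i by (cases "i - 1 = 0") (auto simp: qnode_def)
  next
    case (Q b i')
    have "b = a" "i' < i" "1 \<le> i'" using anc ne vV \<open>u = _\<close> Q by (auto simp: VV_simps)
    then show ?thesis using nx ad \<open>u = _\<close> Q i by (auto simp: qnode_def)
  next
    case (P c e j) then show ?thesis using xv by simp
  qed
next
  case (T c a xs)
  obtain ys where v: "v = T c a ys" and p: "prefix xs ys" and ne2: "xs \<noteq> ys"
    using anc ne T by (cases v) auto
  have aV: "a \<in> V" and ys: "length ys \<le> s" using vV v by (auto simp: VV_simps)
  have lt: "length xs < length ys" using p ne2 by (metis le_neq_implies_less prefix_length_le prefix_length_prefix prefix_order.antisym prefix_order.order_refl)
  have tk: "take (Suc (length xs)) ys = xs @ [ys ! length xs]" using take_Suc_prefix p lt by blast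
  have nx: "nxt1 u v = T c a (xs @ [ys ! length xs])" using T v tk by (simp add: nxt1_def)
  have "adj u (nxt1 u v)" using nx T adjT aV lt ys by simp
  moreover have "prefix (xs @ [ys ! length xs]) ys" using tk by (metis prefix_def append_take_drop_id)
  ultimately show ?thesis using nx T v lt ys xu by (auto dest: prefix_length_le)
next
  case (P c e j) then show ?thesis using xu by simp
qed

lemma om_C: "isC (chi r) \<Longrightarrow> om r = chi r"
  by (auto simp: isC_def om_def)

lemma om_eq: assumes "rob_step adj r r'" "\<not> isC (chi r)" "\<not> isC (chi r')"
  shows "om r' = om r"
proof -
  have "near adj (chi r) (chi r')" using chi_near assms(1) by blast
  then have "chi r' = chi r \<or> adj (chi r) (chi r')" by (simp add: near_def)
  then show ?thesis
  proof
    assume "adj (chi r) (chi r')"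
    from om0_adj[OF this isX_chi isX_chi] assms(2,3) show ?thesis
      unfolding om_def isC_def by metis
  qed (simp add: om_def)
qed

lemma om_VV: "r \<in> VV \<Longrightarrow> om r \<in> VV"
  using om_form sig_in m1 by (fastforce simp: VV_simps)

lemma anc1_om: assumes "r \<in> VV" "\<not> isC (chi r)" shows "anc1 (om r) (chi r) \<and> om r \<noteq> chi r"
proof -
  have c: "chi r \<in> VV" "isX (chi r)" using chi_VV assms isX_chi by auto
  show ?thesis
  proof (cases "chi r")
    case (T c a xs) then show ?thesis using c by (simp add: om_def)
  next
    case (P c e j) then show ?thesis using c by simp
  next
    case (Q a i) then show ?thesis using c assms(2) by (auto simp: om_def VV_simps isC_def)
  qed
qed

lemma ph2_desc: assumes np: "near adj p1 (om r)" and rV: "r \<in> VV" and nc: "\<not> isC (chi r)"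
  shows "Reach adj (Gl chi) p1 (om r) r"
proof -
  define S where "S = (\<lambda>p1 p2 r. r \<in> VV \<and> near adj p1 (om r) \<and> \<not> isC (chi r) \<and> p2 \<in> VV \<and>
     isX p2 \<and> anc1 p2 (chi r) \<and> p2 \<noteq> chi r)"
  define \<mu> where "\<mu> = (\<lambda>(p1::'v hvert) (p2::'v hvert) (r::'v hvert). m + s - lev1 p2)"
  have xo: "isX (om r)" using om_form[OF rV] by auto
  have S0: "S p1 (om r) r" unfolding S_def using rV np nc anc1_om[OF rV nc] om_VV[OF rV] xo
    by simp
  show ?thesis
  proof (rule Reach_measure[of S, OF S0])
    fix p1 p2 r
    assume S: "S p1 p2 r" and nG: "\<not> Gl chi p1 p2 r"
    then have rV: "r \<in> VV" and np: "near adj p1 (om r)" and nc: "\<not> isC (chi r)" and p2V: "p2 \<in> VV"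
      and xp2: "isX p2" and anc: "anc1 p2 (chi r)" and ne: "p2 \<noteq> chi r"
      unfolding S_def by auto
    have p1V: "p1 \<in> VV" using near_VV np om_VV rV by blast
    have nn: "\<not> near adj p2 (chi r)" using nG p1V p2V rV unfolding Gl_def by blast
    have cV: "chi r \<in> VV" using chi_VV rV by blast
    define p2' where "p2' = nxt1 p2 (chi r)"
    have props: "adj p2 p2'" "anc1 p2' (chi r)" "isX p2'" "lev1 p2' = Suc (lev1 p2)"
      "lev1 p2' \<le> lev1 (chi r)" "lev1 (chi r) \<le> m + s"
      using nxt1_props[OF anc ne p2V cV xp2 isX_chi] p2'_def by auto
    have p2'V: "p2' \<in> VV" using adj_VV props(1) by blast
    have ne': "p2' \<noteq> chi r" using props(1) nn adj_near by blast
    have omV: "om r \<in> VV" using om_VV rV by blast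
    have step: "\<forall>r'. rob_step adj r r' \<longrightarrow> Gl chi (om r) p2' r' \<or> r' = om r \<or> r' = p2' \<or>
            (S (om r) p2' r' \<and> \<mu> (om r) p2' r' < \<mu> p1 p2 r)"
    proof (intro allI impI)
      fix r' assume rs: "rob_step adj r r'"
      have r'V: "r' \<in> VV" using rob_VV rs rV by blast
      have nr: "near adj (om r) (om r')" using om_near rs by blast
      show "Gl chi (om r) p2' r' \<or> r' = om r \<or> r' = p2' \<or>
            (S (om r) p2' r' \<and> \<mu> (om r) p2' r' < \<mu> p1 p2 r)"
      proof (cases "isC (chi r')")
        case True
        then have "near adj (om r) (chi r')" using nr om_C by simp
        then show ?thesis using omV p2'V r'V by (simp add: Gl_def)
      next
        case False
        show ?thesis
        proof (cases "chi r' = p2'")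
          case True
          then show ?thesis using omV p2'V r'V near_refl by (simp add: Gl_def)
        next
          case ne2: False
          have oe: "om r' = om r" using om_eq rs nc False by blast
          have "anc1 p2' (chi r')"
          proof (cases "chi r' = chi r")
            case True then show ?thesis using props by simp
          next
            case nq: False
            then have "adj (chi r) (chi r')" using chi_near[OF rs] by (auto simp: near_def)
            then show ?thesis using tree1[OF props(2) ne' p2'V cV isX_chi _ isX_chi False]
              chi_VV r'V by blast
          qed
          then have "S (om r) p2' r'" unfolding S_def
            using r'V oe near_refl False p2'V props ne2 by auto
          moreover have "\<mu> (om r) p2' r' < \<mu> p1 p2 r" unfolding \<mu>_def using props by simp
          ultimately show ?thesis by blast
        qed
      qed
    qed
    have "near adj p2 p2'" using props adj_near by blast
    then show "\<exists>p1' p2'. near adj p1 p1' \<and> near adj p2 p2' \<and> (r = p1' \<or> r = p2' \<or>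
        (\<forall>r'. rob_step adj r r' \<longrightarrow> Gl chi p1' p2' r' \<or> r' = p1' \<or> r' = p2' \<or>
            (S p1' p2' r' \<and> \<mu> p1' p2' r' < \<mu> p1 p2 r)))"
      using np step by blast
  qed
qed

lemma ph2: assumes p1V: "p1 \<in> VV" and p2V: "p2 \<in> VV" and rV: "r \<in> VV" and np: "near adj p1 (om r)"
  shows "Reach adj (Gl chi) p1 p2 r"
proof (cases "isC (chi r)")
  case True
  then show ?thesis using om_C np p1V p2V rV by (intro Reach.base) (simp add: Gl_def)
next
  case False
  show ?thesis
  proof (rule Reach_travel[where t = om and g = om and K = "\<lambda>r. r \<in> VV \<and> \<not> isC (chi r)"])
    show "(adj\<^sup>*\<^sup>*) p2 (om r)" using conn p2V om_VV rV by blast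
    show "near adj p1 (om r)" by fact
    show "r \<in> VV \<and> \<not> isC (chi r)" using rV False by simp
    show "\<And>r r'. rob_step adj r r' \<Longrightarrow> near adj (om r) (om r')" using om_near by blast
    show "\<And>p1 r. near adj p1 (om r) \<Longrightarrow> r \<in> VV \<and> \<not> isC (chi r) \<Longrightarrow> Reach adj (Gl chi) p1 (om r) r"
      using ph2_desc by blast
    fix r r' p2
    assume K: "r \<in> VV \<and> \<not> isC (chi r)" and rs: "rob_step adj r r'" and w: "(adj\<^sup>*\<^sup>*) p2 (om r)"
    have r'V: "r' \<in> VV" using rob_VV rs K by blast
    have p2V: "p2 \<in> VV" using walk_VV w om_VV K by blast
    show "Gl chi (om r) p2 r' \<or> (r' \<in> VV \<and> \<not> isC (chi r')) \<and> om r' = om r"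
    proof (cases "isC (chi r')")
      case True
      then have "near adj (om r) (chi r')" using om_near[OF rs] om_C by simp
      then show ?thesis using om_VV K p2V r'V by (simp add: Gl_def)
    next
      case False
      then show ?thesis using om_eq rs K r'V by blast
    qed
  qed
qed

lemma pidx_pn: "i \<le> 2 * l \<Longrightarrow> pidx (pn True e i) = i"
  by (cases "i = 0") (simp_all add: pn0 pnmid)

lemma phi_P_form: assumes "r \<in> VV" "\<not> isX (phi r)"
  shows "\<exists>e j. phi r = P True e j \<and> e \<in> A \<and> 1 \<le> j \<and> j \<le> 2 * l"
  using assms by (cases r) (auto simp: VV_simps)

lemma chi_eq_phi: "isX (phi r) \<Longrightarrow> chi r = phi r"
  using chi_phi chi_fix by metis

lemma P_step: assumes rs: "rob_step adj r r'" and pr: "phi r = P True e j" and pr': "phi r' = P True e' j'"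
  shows "e' = e \<and> (j' = j \<or> j' = Suc j \<or> Suc j' = j)"
proof -
  have "near adj (phi r) (phi r')" using phi_near rs by blast
  then have "P True e' j' = P True e j \<or> adj (P True e j) (P True e' j')"
    using pr pr' by (auto simp: near_def)
  then show ?thesis
  proof
    assume "adj (P True e j) (P True e' j')"
    from nbr_P[OF this] obtain c' where
      "1 \<le> j" "P True e' j' = pn c' e (Suc j) \<or> P True e' j' = pn c' e (j - 1)" by blast
    then show ?thesis by (auto simp: P_eq_pn)
  qed simp
qed

lemma ph3_desc: assumes np: "near adj p1 (chi r)" and rV: "r \<in> VV" and nx: "\<not> isX (phi r)"
  shows "Reach adj (Gl phi) p1 (pn True (pedge (phi r)) 0) r"
proof -
  define S where "S = (\<lambda>p1 p2 r. r \<in> VV \<and> near adj p1 (chi r) \<and>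
     (\<exists>e i j. e \<in> A \<and> p2 = pn True e i \<and> phi r = P True e j \<and> i < j \<and> 1 \<le> j \<and> j \<le> 2 * l))"
  define \<mu> where "\<mu> = (\<lambda>(p1::'v hvert) (p2::'v hvert) (r::'v hvert). Suc (2 * l) - pidx p2)"
  obtain e j where ej: "phi r = P True e j" "e \<in> A" "1 \<le> j" "j \<le> 2 * l"
    using phi_P_form rV nx by blast
  have "\<exists>ea i j'. ea \<in> A \<and> pn True e 0 = pn True ea i \<and> phi r = P True ea j' \<and> i < j' \<and> 1 \<le> j' \<and> j' \<le> 2 * l"
    by (rule exI[of _ e], rule exI[of _ 0], rule exI[of _ j]) (use ej in simp)
  then have "S p1 (pn True e 0) r" unfolding S_def using rV np by blast
  then have S0: "S p1 (pn True (pedge (phi r)) 0) r" using ej by simp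
  show ?thesis
  proof (rule Reach_measure[of S, OF S0])
    fix p1 p2 r
    assume S: "S p1 p2 r" and nG: "\<not> Gl phi p1 p2 r"
    then obtain e i j where rV: "r \<in> VV" and np: "near adj p1 (chi r)" and e: "e \<in> A"
      and p2: "p2 = pn True e i" and pr: "phi r = P True e j" and ij: "i < j" "1 \<le> j" "j \<le> 2 * l"
      unfolding S_def by blast
    have p1V: "p1 \<in> VV" using near_VV np chi_VV rV by blast
    have p2V: "p2 \<in> VV" using p2 pn_VV e ij by simp
    have nn: "\<not> near adj p2 (phi r)" using nG p1V p2V rV unfolding Gl_def by blast
    have "j \<noteq> Suc i"
    proof
      assume h: "j = Suc i"
      have "pn True e (Suc i) = P True e (Suc i)" using h ij by (simp add: pnmid)
      then have "adj p2 (phi r)" using adjPn[OF e, of i True] p2 pr h ij by simp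
      then show False using nn adj_near by blast
    qed
    then have sij: "Suc i < j" using ij by simp
    define p2' where "p2' = pn True e (Suc i)"
    have p2'P: "p2' = P True e (Suc i)" using p2'_def sij ij by (simp add: pnmid)
    have np2: "near adj p2 p2'" using adjPn[OF e, of i True] p2 p2'_def ij adj_near by simp
    have p2'V: "p2' \<in> VV" using p2'P e sij ij by (simp add: VV_simps)
    have cV: "chi r \<in> VV" using chi_VV rV by blast
    have step: "\<forall>r'. rob_step adj r r' \<longrightarrow> Gl phi (chi r) p2' r' \<or> r' = chi r \<or> r' = p2' \<or>
            (S (chi r) p2' r' \<and> \<mu> (chi r) p2' r' < \<mu> p1 p2 r)"
    proof (intro allI impI)
      fix r' assume rs: "rob_step adj r r'"
      have r'V: "r' \<in> VV" using rob_VV rs rV by blast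
      show "Gl phi (chi r) p2' r' \<or> r' = chi r \<or> r' = p2' \<or>
            (S (chi r) p2' r' \<and> \<mu> (chi r) p2' r' < \<mu> p1 p2 r)"
      proof (cases "isX (phi r')")
        case True
        then have "near adj (chi r) (phi r')" using chi_near[OF rs] chi_eq_phi by metis
        then show ?thesis using cV p2'V r'V by (simp add: Gl_def)
      next
        case False
        obtain e' j' where ej': "phi r' = P True e' j'" "e' \<in> A" "1 \<le> j'" "j' \<le> 2 * l"
          using phi_P_form r'V False by blast
        have "e' = e \<and> (j' = j \<or> j' = Suc j \<or> Suc j' = j)" using P_step[OF rs pr ej'(1)] .
        then have ee: "e' = e" and jj: "Suc i \<le> j'" using sij by auto
        show ?thesis
        proof (cases "j' = Suc i")
          case True
          then have "phi r' = p2'" using p2'P ej' ee by simp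
          then show ?thesis using cV p2'V r'V near_refl by (simp add: Gl_def)
        next
          case False
          then have lt: "Suc i < j'" using jj by simp
          have "\<exists>ea i' j''. ea \<in> A \<and> p2' = pn True ea i' \<and> phi r' = P True ea j'' \<and> i' < j'' \<and> 1 \<le> j'' \<and> j'' \<le> 2 * l"
            by (rule exI[of _ e], rule exI[of _ "Suc i"], rule exI[of _ j']) (use e p2'_def ej' ee lt in simp)
          then have "S (chi r) p2' r'" unfolding S_def
            using r'V chi_near[OF rs] by blast
          moreover have "\<mu> (chi r) p2' r' < \<mu> p1 p2 r"
            unfolding \<mu>_def using p2 p2'_def pidx_pn sij ij by simp
          ultimately show ?thesis by blast
        qed
      qed
    qed
    show "\<exists>p1' p2'. near adj p1 p1' \<and> near adj p2 p2' \<and> (r = p1' \<or> r = p2' \<or>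
        (\<forall>r'. rob_step adj r r' \<longrightarrow> Gl phi p1' p2' r' \<or> r' = p1' \<or> r' = p2' \<or>
            (S p1' p2' r' \<and> \<mu> p1' p2' r' < \<mu> p1 p2 r)))"
      using np np2 step by blast
  qed
qed

lemma ph3: assumes p1V: "p1 \<in> VV" and p2V: "p2 \<in> VV" and rV: "r \<in> VV" and np: "near adj p1 (chi r)"
  shows "Reach adj (Gl phi) p1 p2 r"
proof (cases "isX (phi r)")
  case True
  then show ?thesis using chi_eq_phi np p1V p2V rV by (intro Reach.base) (simp add: Gl_def)
next
  case False
  define t where "t = (\<lambda>r. pn True (pedge (phi r)) 0)"
  have tV: "t r \<in> VV" if h: "r \<in> VV" "\<not> isX (phi r)" for r
  proof -
    obtain e j where "phi r = P True e j" "e \<in> A" using phi_P_form[OF h] by blast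
    then show ?thesis unfolding t_def using pn_VV by simp
  qed
  show ?thesis
  proof (rule Reach_travel[where t = t and g = chi and K = "\<lambda>r. r \<in> VV \<and> \<not> isX (phi r)"])
    show "(adj\<^sup>*\<^sup>*) p2 (t r)" using conn p2V tV rV False by blast
    show "near adj p1 (chi r)" by fact
    show "r \<in> VV \<and> \<not> isX (phi r)" using rV False by simp
    show "\<And>r r'. rob_step adj r r' \<Longrightarrow> near adj (chi r) (chi r')" using chi_near by blast
    show "\<And>p1 r. near adj p1 (chi r) \<Longrightarrow> r \<in> VV \<and> \<not> isX (phi r) \<Longrightarrow> Reach adj (Gl phi) p1 (t r) r"
      using ph3_desc unfolding t_def by blast
    fix r r' p2
    assume K: "r \<in> VV \<and> \<not> isX (phi r)" and rs: "rob_step adj r r'" and w: "(adj\<^sup>*\<^sup>*) p2 (t r)"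
    have r'V: "r' \<in> VV" using rob_VV rs K by blast
    have p2V: "p2 \<in> VV" using walk_VV w tV K by blast
    show "Gl phi (chi r) p2 r' \<or> (r' \<in> VV \<and> \<not> isX (phi r')) \<and> t r' = t r"
    proof (cases "isX (phi r')")
      case True
      then have "near adj (chi r) (phi r')" using chi_near[OF rs] chi_eq_phi by metis
      then show ?thesis using chi_VV K p2V r'V by (simp add: Gl_def)
    next
      case False
      obtain e j where ej: "phi r = P True e j" using phi_P_form K by blast
      obtain e' j' where ej': "phi r' = P True e' j'" using phi_P_form r'V False by blast
      have "e' = e" using P_step[OF rs ej ej'] by simp
      then show ?thesis using r'V False ej ej' unfolding t_def by simp
    qed
  qed
qed

definition own :: "'v hvert \<Rightarrow> 'v" where
  "own v = (case v of T c a xs \<Rightarrow> a | P c e j \<Rightarrow> (if j < l then fst e else snd e) | Q a i \<Rightarrow> a)"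

definition anc2 :: "'v hvert \<Rightarrow> 'v hvert \<Rightarrow> bool" where
  "anc2 u v = (case u of
     T c a xs \<Rightarrow> \<not> c \<and> (case v of T c' b ys \<Rightarrow> \<not> c' \<and> b = a \<and> prefix xs ys
        | P c' e j \<Rightarrow> \<not> c' \<and> ((j < l \<and> fst e = a \<and> prefix xs (outl a e)) \<or>
                              (Suc l < j \<and> snd e = a \<and> prefix xs (inl a e)))
        | Q _ _ \<Rightarrow> False)
   | P c e j \<Rightarrow> \<not> c \<and> (case v of P c' e' j' \<Rightarrow> \<not> c' \<and> e' = e \<and>
          ((j < l \<and> j \<le> j' \<and> j' < l) \<or> (Suc l < j \<and> Suc l < j' \<and> j' \<le> j))
        | _ \<Rightarrow> False)
   | Q _ _ \<Rightarrow> False)"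

definition lev2 :: "'v hvert \<Rightarrow> nat" where
  "lev2 v = (case v of T c a xs \<Rightarrow> length xs | P c e j \<Rightarrow> (if j < l then s + j else s + (Suc (2 * l) - j))
     | Q _ _ \<Rightarrow> 0)"

definition nxt2 :: "'v hvert \<Rightarrow> 'v hvert \<Rightarrow> 'v hvert" where
  "nxt2 u v = (case u of
     T c a xs \<Rightarrow> (case v of T _ _ ys \<Rightarrow> T False a (take (Suc (length xs)) ys)
        | P _ e j \<Rightarrow> (if j < l then (if length xs < s then T False a (take (Suc (length xs)) (outl a e)) else P False e 1)
                     else (if length xs < s then T False a (take (Suc (length xs)) (inl a e)) else P False e (2 * l)))
        | _ \<Rightarrow> u)
   | P c e j \<Rightarrow> (if j < l then P False e (Suc j) else P False e (j - 1))
   | _ \<Rightarrow> u)"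

lemma own_simps[simp]: "own (T c a xs) = a" "own (P c e j) = (if j < l then fst e else snd e)"
  by (simp_all add: own_def)

lemma anc2_simps[simp]:
  "anc2 (T c a xs) (T c' b ys) \<longleftrightarrow> \<not> c \<and> \<not> c' \<and> b = a \<and> prefix xs ys"
  "anc2 (T c a xs) (P c' e j) \<longleftrightarrow> \<not> c \<and> \<not> c' \<and> ((j < l \<and> fst e = a \<and> prefix xs (outl a e)) \<or>
                              (Suc l < j \<and> snd e = a \<and> prefix xs (inl a e)))"
  "anc2 (T c a xs) (Q b i) \<longleftrightarrow> False"
  "anc2 (P c e j) (P c' e' j') \<longleftrightarrow> \<not> c \<and> \<not> c' \<and> e' = e \<and>
          ((j < l \<and> j \<le> j' \<and> j' < l) \<or> (Suc l < j \<and> Suc l < j' \<and> j' \<le> j))"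
  "anc2 (P c e j) (T c' b ys) \<longleftrightarrow> False"
  "anc2 (P c e j) (Q b i) \<longleftrightarrow> False"
  "anc2 (Q a i) v \<longleftrightarrow> False"
  by (simp_all add: anc2_def)

lemma lev2_simps[simp]: "lev2 (T c a xs) = length xs"
  "lev2 (P c e j) = (if j < l then s + j else s + (Suc (2 * l) - j))"
  by (simp_all add: lev2_def)

lemma priv_form: assumes "v \<in> VV" "\<not> isG1 v"
  shows "(\<exists>a xs. v = T False a xs \<and> a \<in> V \<and> length xs \<le> s) \<or>
     (\<exists>e j. v = P False e j \<and> e \<in> A \<and> 1 \<le> j \<and> j \<le> 2 * l \<and> j \<noteq> l \<and> j \<noteq> Suc l)"
  using assms by (cases v) (auto simp: VV_simps)

lemma pnF: "1 \<le> j \<Longrightarrow> j \<le> 2 * l \<Longrightarrow> j \<noteq> l \<Longrightarrow> j \<noteq> Suc l \<Longrightarrow> pn False e j = P False e j"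
  by (simp add: pnmid)

lemma nbr_privT: assumes a: "adj (T False a ys) w" and g: "\<not> isG1 w"
  shows "(ys \<noteq> [] \<and> w = T False a (butlast ys)) \<or> (\<exists>b. w = T False a (ys @ [b])) \<or>
    (\<exists>e. e \<in> A \<and> fst e = a \<and> ys = outl a e \<and> w = P False e 1) \<or>
    (\<exists>e. e \<in> A \<and> snd e = a \<and> ys = inl a e \<and> w = P False e (2 * l))"
proof -
  have p1: "pn False e 1 = P False e 1" for e using l2 by (simp add: pnF)
  have p2: "pn False e (2 * l) = P False e (2 * l)" for e using l2 by (simp add: pnF)
  from nbr_T[OF a] show ?thesis unfolding p1 p2 by blast
qed

lemma nbr_privP: assumes a: "adj (P False e j) w" and g: "\<not> isG1 w" and vV: "P False e j \<in> VV"
  shows "(j < l \<and> ((Suc j < l \<and> w = P False e (Suc j)) \<or> (j = 1 \<and> w = T False (fst e) (outl (fst e) e)) \<or>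
                  (2 \<le> j \<and> w = P False e (j - 1)))) \<or>
         (Suc l < j \<and> ((j = 2 * l \<and> w = T False (snd e) (inl (snd e) e)) \<or> (j < 2 * l \<and> w = P False e (Suc j)) \<or>
                  (Suc l < j - 1 \<and> w = P False e (j - 1))))"
proof -
  have e: "e \<in> A" and j: "1 \<le> j" "j \<le> 2 * l" "j \<noteq> l" "j \<noteq> Suc l" using vV by (auto simp: VV_simps)
  from nbr_P[OF a] obtain c' where c': "False = (c' \<or> j = l \<or> j = Suc l)"
    and w: "w = pn c' e (Suc j) \<or> w = pn c' e (j - 1)" by blast
  have cf: "c' = False" using c' by simp
  consider (lo) "j < l" | (hi) "Suc l < j" using j by linarith
  then show ?thesis
  proof cases
    case lo
    from w show ?thesis
    proof
      assume w1: "w = pn c' e (Suc j)"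
      show ?thesis
      proof (cases "Suc j = l")
        case True then show ?thesis using w1 g cf lo by (simp add: pnmid)
      next
        case False then show ?thesis using w1 cf lo j by (simp add: pnF)
      qed
    next
      assume w1: "w = pn c' e (j - 1)"
      show ?thesis
      proof (cases "j = 1")
        case True then show ?thesis using w1 cf lo by (simp add: pn0)
      next
        case False then show ?thesis using w1 cf lo j by (simp add: pnF)
      qed
    qed
  next
    case hi
    from w show ?thesis
    proof
      assume w1: "w = pn c' e (Suc j)"
      show ?thesis
      proof (cases "j = 2 * l")
        case True then show ?thesis using w1 cf hi by (simp add: pnend)
      next
        case False then show ?thesis using w1 cf hi j by (simp add: pnF)
      qed
    next
      assume w1: "w = pn c' e (j - 1)"
      show ?thesis
      proof (cases "j - 1 = Suc l")
        case True
        have "pn False e (Suc l) = P True e (Suc l)" using l2 by (simp add: pnmid)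
        then show ?thesis using w1 g cf hi True by simp
      next
        case False
        then have "Suc l < j - 1" using hi by linarith
        moreover have "w = P False e (j - 1)" using w1 cf hi j False by (simp add: pnF)
        ultimately show ?thesis using hi by blast
      qed
    qed
  qed
qed

lemma own_adj: assumes a: "adj v w" and vV: "v \<in> VV" and gv: "\<not> isG1 v" and gw: "\<not> isG1 w"
  shows "own w = own v"
proof -
  from priv_form[OF vV gv] show ?thesis
  proof (elim disjE exE conjE)
    fix a xs assume v: "v = T False a xs"
    from nbr_privT[OF a[unfolded v] gw] show ?thesis using v l2 by auto
  next
    fix e j assume v: "v = P False e j"
    from nbr_privP[OF a[unfolded v] gw vV[unfolded v]] show ?thesis using v by auto
  qed
qed

lemma tree2:
  assumes anc: "anc2 u v" and ne: "u \<noteq> v" and uV: "u \<in> VV" and vV: "v \<in> VV" and gv: "\<not> isG1 v"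
    and a: "adj v w" and gw: "\<not> isG1 w"
  shows "anc2 u w"
proof -
  from priv_form[OF vV gv] show ?thesis
  proof (elim disjE exE conjE)
    fix a' ys assume v: "v = T False a' ys"
    obtain a xs where u: "u = T False a xs" and h: "a' = a" "prefix xs ys" "xs \<noteq> ys"
      using anc ne v by (cases u) auto
    from nbr_privT[OF a[unfolded v] gw] show ?thesis
    proof (elim disjE exE conjE)
      assume "ys \<noteq> []" "w = T False a' (butlast ys)"
      then show ?thesis using u h prefix_butlast' by simp
    next
      fix b assume "w = T False a' (ys @ [b])"
      then show ?thesis using u h by (simp add: prefix_snoc)
    next
      fix e assume "e \<in> A" "fst e = a'" "ys = outl a' e" "w = P False e 1"
      then show ?thesis using u h l2 by simp
    next
      fix e assume "e \<in> A" "snd e = a'" "ys = inl a' e" "w = P False e (2 * l)"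
      then show ?thesis using u h l2 by simp
    qed
  next
    fix e j assume v: "v = P False e j" and e: "e \<in> A" and j: "1 \<le> j" "j \<le> 2 * l" "j \<noteq> l" "j \<noteq> Suc l"
    have nb: "(j < l \<and> ((Suc j < l \<and> w = P False e (Suc j)) \<or> (j = 1 \<and> w = T False (fst e) (outl (fst e) e)) \<or>
                  (2 \<le> j \<and> w = P False e (j - 1)))) \<or>
         (Suc l < j \<and> ((j = 2 * l \<and> w = T False (snd e) (inl (snd e) e)) \<or> (j < 2 * l \<and> w = P False e (Suc j)) \<or>
                  (Suc l < j - 1 \<and> w = P False e (j - 1))))"
      using nbr_privP[OF a[unfolded v] gw vV[unfolded v]] .
    show ?thesis
    proof (cases u)
      case (T c a xs)
      have c: "\<not> c" and side: "(j < l \<and> fst e = a \<and> prefix xs (outl a e)) \<or>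
                              (Suc l < j \<and> snd e = a \<and> prefix xs (inl a e))"
        using anc T v by auto
      from side nb show ?thesis using T c by auto
    next
      case (P c e0 j0)
      have c: "\<not> c" and e0: "e = e0" and side: "(j0 < l \<and> j0 \<le> j \<and> j < l) \<or> (Suc l < j0 \<and> Suc l < j \<and> j \<le> j0)"
        using anc P v by auto
      have jj: "j \<noteq> j0" using ne P v e0 c by auto
      have j0: "1 \<le> j0" "j0 \<le> 2 * l" using uV P by (auto simp: VV_simps)
      from side nb show ?thesis using P c e0 jj j0 by auto
    next
      case (Q a i) then show ?thesis using anc by simp
    qed
  qed
qed

lemma anc2_lev: assumes "anc2 u v" "v \<in> VV" shows "lev2 u \<le> lev2 v \<and> lev2 v \<le> s + l"
proof (cases u)
  case (T c a xs)
  show ?thesis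
  proof (cases v)
    case (T c' b ys) then show ?thesis using assms \<open>u = _\<close> by (auto simp: VV_simps dest: prefix_length_le)
  next
    case (P c' e j)
    have e: "e \<in> A" and j: "1 \<le> j" "j \<le> 2 * l" using assms P by (auto simp: VV_simps)
    have "length xs \<le> s" using assms \<open>u = _\<close> P outl_len[OF e] inl_len[OF e]
      by (auto dest!: prefix_length_le)
    then show ?thesis using \<open>u = _\<close> P j assms by auto
  next
    case (Q b i) then show ?thesis using assms \<open>u = _\<close> by simp
  qed
next
  case (P c e j)
  then obtain c' j' where v: "v = P c' e j'" using assms by (cases v) auto
  then show ?thesis using assms P by (auto simp: VV_simps)
next
  case (Q a i) then show ?thesis using assms by simp
qed

lemma anc2_root: assumes "r \<in> VV" "\<not> isG1 r" shows "anc2 (T False (own r) []) r"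
  using priv_form[OF assms] by auto

lemma own_V: assumes "r \<in> VV" "\<not> isG1 r" shows "own r \<in> V"
  using priv_form[OF assms] A_V by auto

lemma prefix_len_eq: assumes "prefix xs ys" "length ys \<le> length xs" shows "xs = ys"
proof -
  obtain zs where "ys = xs @ zs" using assms(1) prefixE by blast
  then show ?thesis using assms(2) by simp
qed

lemma nxt2_props:
  assumes anc: "anc2 u v" and ne: "u \<noteq> v" and uV: "u \<in> VV" and vV: "v \<in> VV"
    and gu: "\<not> isG1 u" and gv: "\<not> isG1 v"
  shows "adj u (nxt2 u v) \<and> anc2 (nxt2 u v) v \<and> \<not> isG1 (nxt2 u v) \<and>
    lev2 (nxt2 u v) = Suc (lev2 u)"
proof -
  from priv_form[OF uV gu] show ?thesis
  proof (elim disjE exE conjE)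
    fix a xs assume u: "u = T False a xs" and aV: "a \<in> V" and xs: "length xs \<le> s"
    from priv_form[OF vV gv] show ?thesis
    proof (elim disjE exE conjE)
      fix b ys assume v: "v = T False b ys" and ys: "length ys \<le> s"
      have h: "b = a" "prefix xs ys" "xs \<noteq> ys" using anc ne u v by auto
      have lt: "length xs < length ys" using h
        by (metis le_neq_implies_less prefix_length_le prefix_length_prefix prefix_order.antisym prefix_order.order_refl)
      have tk: "take (Suc (length xs)) ys = xs @ [ys ! length xs]" using take_Suc_prefix h lt by blast
      have nx: "nxt2 u v = T False a (xs @ [ys ! length xs])" using u v tk by (simp add: nxt2_def)
      have "prefix (xs @ [ys ! length xs]) ys" using tk by (metis prefix_def append_take_drop_id)
      then show ?thesis using nx u v h adjT[OF aV] lt ys by simp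
    next
      fix e j assume v: "v = P False e j" and e: "e \<in> A" and j: "1 \<le> j" "j \<le> 2 * l" "j \<noteq> l" "j \<noteq> Suc l"
      have side: "(j < l \<and> fst e = a \<and> prefix xs (outl a e)) \<or> (Suc l < j \<and> snd e = a \<and> prefix xs (inl a e))"
        using anc u v by simp
      then show ?thesis
      proof
        assume h: "j < l \<and> fst e = a \<and> prefix xs (outl a e)"
        have L: "length (outl a e) = s" using outl_len[OF e] h by simp
        show ?thesis
        proof (cases "length xs < s")
          case True
          have tk: "take (Suc (length xs)) (outl a e) = xs @ [outl a e ! length xs]"
            using take_Suc_prefix[of xs "outl a e"] h L True by simp
          have nx: "nxt2 u v = T False a (xs @ [outl a e ! length xs])" using u v h True tk by (simp add: nxt2_def)
          have "prefix (xs @ [outl a e ! length xs]) (outl a e)" using tk by (metis prefix_def append_take_drop_id)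
          then show ?thesis using nx u v h adjT[OF aV] True by simp
        next
          case False
          then have xL: "xs = outl a e" using h L xs False prefix_len_eq[of xs] by simp
          have nx: "nxt2 u v = P False e 1" using u v h False by (simp add: nxt2_def)
          have "adj (pn False e 0) (pn False e 1)" using adjPn[OF e, of 0 False] by simp
          moreover have "pn False e 1 = P False e 1" using l2 by (simp add: pnF)
          moreover have "pn False e 0 = u" using u xL h by (simp add: pn0)
          ultimately show ?thesis using nx u v h j xs False by simp
        qed
      next
        assume h: "Suc l < j \<and> snd e = a \<and> prefix xs (inl a e)"
        have L: "length (inl a e) = s" using inl_len[OF e] h by simp
        have nl: "\<not> j < l" using h by simp
        show ?thesis
        proof (cases "length xs < s")
          case True
          have tk: "take (Suc (length xs)) (inl a e) = xs @ [inl a e ! length xs]"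
            using take_Suc_prefix[of xs "inl a e"] h L True by simp
          have nx: "nxt2 u v = T False a (xs @ [inl a e ! length xs])" using u v nl True tk by (simp add: nxt2_def)
          have "prefix (xs @ [inl a e ! length xs]) (inl a e)" using tk by (metis prefix_def append_take_drop_id)
          then show ?thesis using nx u v h adjT[OF aV] True by simp
        next
          case False
          then have xL: "xs = inl a e" using h L xs False prefix_len_eq[of xs] by simp
          have nx: "nxt2 u v = P False e (2 * l)" using u v nl False by (simp add: nxt2_def)
          have "adj (pn False e (2 * l)) (pn False e (Suc (2 * l)))" using adjPn[OF e, of "2 * l" False] by simp
          moreover have "pn False e (2 * l) = P False e (2 * l)" using l2 by (simp add: pnF)
          moreover have "pn False e (Suc (2 * l)) = u" using u xL h by (simp add: pnend)
          ultimately have "adj u (P False e (2 * l))" using adj_sym by simp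
          then show ?thesis using nx u v h j xs False l2 by simp
        qed
      qed
    qed
  next
    fix e j0 assume u: "u = P False e j0" and e: "e \<in> A" and j0: "1 \<le> j0" "j0 \<le> 2 * l" "j0 \<noteq> l" "j0 \<noteq> Suc l"
    obtain c' j where v: "v = P c' e j" using anc u by (cases v) auto
    have h: "\<not> c'" "(j0 < l \<and> j0 \<le> j \<and> j < l) \<or> (Suc l < j0 \<and> Suc l < j \<and> j \<le> j0)"
      using anc u v by auto
    have jj: "j \<noteq> j0" using ne u v h by auto
    from h(2) show ?thesis
    proof
      assume lo: "j0 < l \<and> j0 \<le> j \<and> j < l"
      have nx: "nxt2 u v = P False e (Suc j0)" using u lo by (simp add: nxt2_def)
      have "adj (pn False e j0) (pn False e (Suc j0))" using adjPn[OF e, of j0 False] j0 by simp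
      moreover have "pn False e j0 = P False e j0" using j0 by (simp add: pnF)
      moreover have "pn False e (Suc j0) = P False e (Suc j0)" using lo jj j0 by (simp add: pnF)
      ultimately show ?thesis using nx u v h lo jj by simp
    next
      assume hi: "Suc l < j0 \<and> Suc l < j \<and> j \<le> j0"
      have nx: "nxt2 u v = P False e (j0 - 1)" using u hi by (simp add: nxt2_def)
      have "adj (pn False e (j0 - 1)) (pn False e (Suc (j0 - 1)))" using adjPn[OF e, of "j0 - 1" False] j0 by simp
      moreover have "pn False e (j0 - 1) = P False e (j0 - 1)"
      proof -
        have "Suc l < j0 - 1" using hi jj by linarith
        then show ?thesis using j0 by (simp add: pnF)
      qed
      moreover have "pn False e (Suc (j0 - 1)) = P False e j0" using j0 by (simp add: pnF)
      ultimately have "adj u (P False e (j0 - 1))" using u adj_sym by simp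
      then show ?thesis using nx u v h hi jj j0 by auto
    qed
  qed
qed

lemma ph4_desc: assumes np: "near adj p1 (phi r)" and rV: "r \<in> VV" and ng: "\<not> isG1 r"
  shows "Reach adj (Gl id) p1 (T False (own r) []) r"
proof (cases "r = T False (own r) []")
  case True then show ?thesis by (intro Reach.cap) simp
next
  case False
  define S where "S = (\<lambda>p1 p2 r. r \<in> VV \<and> \<not> isG1 r \<and> near adj p1 (phi r) \<and> p2 \<in> VV \<and> \<not> isG1 p2 \<and>
     anc2 p2 r \<and> p2 \<noteq> r)"
  define \<mu> where "\<mu> = (\<lambda>(p1::'v hvert) (p2::'v hvert) (r::'v hvert). s + l - lev2 p2)"
  have S0: "S p1 (T False (own r) []) r" unfolding S_def
    using rV ng np anc2_root[OF rV ng] own_V[OF rV ng] False by (simp add: VV_simps)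
  show ?thesis
  proof (rule Reach_measure[of S, OF S0])
    fix p1 p2 r
    assume S: "S p1 p2 r" and nG: "\<not> Gl id p1 p2 r"
    then have rV: "r \<in> VV" and ng: "\<not> isG1 r" and np: "near adj p1 (phi r)" and p2V: "p2 \<in> VV"
      and g2: "\<not> isG1 p2" and anc: "anc2 p2 r" and ne: "p2 \<noteq> r"
      unfolding S_def by auto
    have p1V: "p1 \<in> VV" using near_VV np phi_VV rV by blast
    have nn: "\<not> near adj p2 r" using nG p1V p2V rV unfolding Gl_def by auto
    define p2' where "p2' = nxt2 p2 r"
    have props: "adj p2 p2'" "anc2 p2' r" "\<not> isG1 p2'" "lev2 p2' = Suc (lev2 p2)"
      using nxt2_props[OF anc ne p2V rV g2 ng] p2'_def by auto
    have lv: "lev2 p2' \<le> lev2 r" "lev2 r \<le> s + l" using anc2_lev[OF props(2) rV] by auto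
    have p2'V: "p2' \<in> VV" using adj_VV props(1) by blast
    have ne': "p2' \<noteq> r" using props(1) nn adj_near by blast
    have phV: "phi r \<in> VV" using phi_VV rV by blast
    have step: "\<forall>r'. rob_step adj r r' \<longrightarrow> Gl id (phi r) p2' r' \<or> r' = phi r \<or> r' = p2' \<or>
            (S (phi r) p2' r' \<and> \<mu> (phi r) p2' r' < \<mu> p1 p2 r)"
    proof (intro allI impI)
      fix r' assume rs: "rob_step adj r r'"
      have r'V: "r' \<in> VV" using rob_VV rs rV by blast
      have nr: "near adj (phi r) (phi r')" using phi_near rs by blast
      show "Gl id (phi r) p2' r' \<or> r' = phi r \<or> r' = p2' \<or>
            (S (phi r) p2' r' \<and> \<mu> (phi r) p2' r' < \<mu> p1 p2 r)"
      proof (cases "isG1 r'")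
        case True
        then have "near adj (phi r) r'" using nr phi_fix[OF True] by simp
        then show ?thesis using phV p2'V r'V by (simp add: Gl_def)
      next
        case ng': False
        show ?thesis
        proof (cases "r' = p2'")
          case True then show ?thesis by simp
        next
          case ne2: False
          have "anc2 p2' r'"
          proof (cases "r' = r")
            case True then show ?thesis using props by simp
          next
            case False
            then have "adj r r'" using rs by (simp add: rob_step_def)
            then show ?thesis using tree2[OF props(2) ne' p2'V rV ng _ ng'] by blast
          qed
          then have "S (phi r) p2' r'" unfolding S_def
            using r'V ng' nr p2'V props ne2 by auto
          moreover have "\<mu> (phi r) p2' r' < \<mu> p1 p2 r" unfolding \<mu>_def using props lv by simp
          ultimately show ?thesis by blast
        qed
      qed
    qed
    have "near adj p2 p2'" using props adj_near by blast
    then show "\<exists>p1' p2'. near adj p1 p1' \<and> near adj p2 p2' \<and> (r = p1' \<or> r = p2' \<or>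
        (\<forall>r'. rob_step adj r r' \<longrightarrow> Gl id p1' p2' r' \<or> r' = p1' \<or> r' = p2' \<or>
            (S p1' p2' r' \<and> \<mu> p1' p2' r' < \<mu> p1 p2 r)))"
      using np step by blast
  qed
qed

lemma ph4: assumes p1V: "p1 \<in> VV" and p2V: "p2 \<in> VV" and rV: "r \<in> VV" and np: "near adj p1 (phi r)"
  shows "Reach adj (Gl id) p1 p2 r"
proof (cases "isG1 r")
  case True
  then show ?thesis using phi_fix[OF True] np p1V p2V rV by (intro Reach.base) (simp add: Gl_def)
next
  case False
  define t where "t = (\<lambda>r. T False (own r) [])"
  have tV: "t r \<in> VV" if h: "r \<in> VV" "\<not> isG1 r" for r
    unfolding t_def using own_V[OF h] by (simp add: VV_simps)
  show ?thesis
  proof (rule Reach_travel[where t = t and g = phi and K = "\<lambda>r. r \<in> VV \<and> \<not> isG1 r"])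
    show "(adj\<^sup>*\<^sup>*) p2 (t r)" using conn p2V tV rV False by blast
    show "near adj p1 (phi r)" by fact
    show "r \<in> VV \<and> \<not> isG1 r" using rV False by simp
    show "\<And>r r'. rob_step adj r r' \<Longrightarrow> near adj (phi r) (phi r')" using phi_near by blast
    show "\<And>p1 r. near adj p1 (phi r) \<Longrightarrow> r \<in> VV \<and> \<not> isG1 r \<Longrightarrow> Reach adj (Gl id) p1 (t r) r"
      using ph4_desc unfolding t_def by blast
    fix r r' p2
    assume K: "r \<in> VV \<and> \<not> isG1 r" and rs: "rob_step adj r r'" and w: "(adj\<^sup>*\<^sup>*) p2 (t r)"
    have r'V: "r' \<in> VV" using rob_VV rs K by blast
    have p2V: "p2 \<in> VV" using walk_VV w tV K by blast
    show "Gl id (phi r) p2 r' \<or> (r' \<in> VV \<and> \<not> isG1 r') \<and> t r' = t r"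
    proof (cases "isG1 r'")
      case True
      then have "near adj (phi r) r'" using phi_near[OF rs] phi_fix[OF True] by simp
      then show ?thesis using phi_VV K p2V r'V by (simp add: Gl_def)
    next
      case False
      have "own r' = own r"
      proof (cases "r' = r")
        case False
        then have "adj r r'" using rs by (simp add: rob_step_def)
        then show ?thesis using own_adj K \<open>\<not> isG1 r'\<close> by blast
      qed simp
      then show ?thesis using r'V False unfolding t_def by simp
    qed
  qed
qed

lemma fin_nbrs: "finite {y. adj x y}"
proof -
  have "finite VV"
  proof -
    have f1: "finite {T c a xs | c a xs. a \<in> V \<and> length xs \<le> s}"
    proof -
      have "{T c a xs | c a xs. a \<in> V \<and> length xs \<le> s} \<subseteq>
        (\<lambda>(c, a, xs). T c a xs) ` (UNIV \<times> V \<times> {xs. set xs \<subseteq> UNIV \<and> length xs \<le> s})"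
      proof
        fix v assume "v \<in> {T c a xs | c a xs. a \<in> V \<and> length xs \<le> s}"
        then obtain c a xs where "v = T c a xs" "a \<in> V" "length xs \<le> s" by blast
        then show "v \<in> (\<lambda>(c, a, xs). T c a xs) ` (UNIV \<times> V \<times> {xs. set xs \<subseteq> UNIV \<and> length xs \<le> s})"
          by (intro image_eqI[of _ _ "(c, a, xs)"]) auto
      qed
      moreover have "finite ((UNIV :: bool set) \<times> V \<times> {xs :: bool list. set xs \<subseteq> UNIV \<and> length xs \<le> s})"
      proof -
        have A: "finite (UNIV :: bool set)" by simp
        have B: "finite {xs :: bool list. set xs \<subseteq> UNIV \<and> length xs \<le> s}"
          using finite_lists_length_le[of "UNIV :: bool set" s] by simp
        show ?thesis using finite_cartesian_product[OF A finite_cartesian_product[OF finV B]] by simp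
      qed
      ultimately show ?thesis by (meson finite_subset finite_imageI)
    qed
    have fA: "finite A" by (rule finite_subset[OF AV finite_cartesian_product[OF finV finV]])
    have f2: "finite {P c e j | c e j. e \<in> A \<and> 1 \<le> j \<and> j \<le> 2 * l \<and> ((j = l \<or> j = l + 1) \<longrightarrow> c)}"
    proof -
      have "{P c e j | c e j. e \<in> A \<and> 1 \<le> j \<and> j \<le> 2 * l \<and> ((j = l \<or> j = l + 1) \<longrightarrow> c)} \<subseteq>
        (\<lambda>(c, e, j). P c e j) ` (UNIV \<times> A \<times> {..2 * l})"
      proof
        fix v assume "v \<in> {P c e j | c e j. e \<in> A \<and> 1 \<le> j \<and> j \<le> 2 * l \<and> ((j = l \<or> j = l + 1) \<longrightarrow> c)}"
        then obtain c e j where "v = P c e j" "e \<in> A" "j \<le> 2 * l" by blast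
        then show "v \<in> (\<lambda>(c, e, j). P c e j) ` (UNIV \<times> A \<times> {..2 * l})"
          by (intro image_eqI[of _ _ "(c, e, j)"]) auto
      qed
      moreover have "finite ((UNIV :: bool set) \<times> A \<times> {..2 * l})"
        by (intro finite_cartesian_product fA) simp_all
      ultimately show ?thesis by (meson finite_subset finite_imageI)
    qed
    have f3: "finite {Q a i | a i. a \<in> V \<and> 1 \<le> i \<and> i \<le> m}"
    proof -
      have "{Q a i | a i. a \<in> V \<and> 1 \<le> i \<and> i \<le> m} \<subseteq> (\<lambda>(a, i). Q a i) ` (V \<times> {..m})"
      proof
        fix v assume "v \<in> {Q a i | a i. a \<in> V \<and> 1 \<le> i \<and> i \<le> m}"
        then obtain a i where "v = Q a i" "a \<in> V" "i \<le> m" by blast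
        then show "v \<in> (\<lambda>(a, i). Q a i) ` (V \<times> {..m})"
          by (intro image_eqI[of _ _ "(a, i)"]) auto
      qed
      moreover have "finite (V \<times> {..m})" by (intro finite_cartesian_product finV) simp
      ultimately show ?thesis by (meson finite_subset finite_imageI)
    qed
    have "finite ({T c a xs | c a xs. a \<in> V \<and> length xs \<le> s} \<union>
      {P c e j | c e j. e \<in> A \<and> 1 \<le> j \<and> j \<le> 2 * l \<and> ((j = l \<or> j = l + 1) \<longrightarrow> c)} \<union>
      {Q a i | a i. a \<in> V \<and> 1 \<le> i \<and> i \<le> m})"
      using f1 f2 f3 by (intro finite_UnI)
    then show ?thesis unfolding VV_def Hverts_def .
  qed
  moreover have "{y. adj x y} \<subseteq> VV"
  proof
    fix y assume "y \<in> {y. adj x y}" then show "y \<in> VV" using adj_VV by blast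
  qed
  ultimately show ?thesis using finite_subset by blast
qed

theorem main: "cop_number VV adj \<le> 2"
proof -
  have "cops_win VV adj 2"
    unfolding cops_win_def
  proof (intro exI[of _ "[q0, q0]"] conjI ballI)
    show "length [q0, q0] = 2" by simp
    show "set [q0, q0] \<subseteq> VV" using q0_VV by simp
    fix r assume rV: "r \<in> VV"
    have R1: "Reach adj (Gl om) q0 q0 r" using ph1 rV by blast
    have R2: "Reach adj (Gl chi) q0 q0 r" by (rule Reach_mono[OF R1 phase_trans[OF ph2]])
    have R3: "Reach adj (Gl phi) q0 q0 r" by (rule Reach_mono[OF R2 phase_trans[OF ph3]])
    have R4: "Reach adj (Gl id) q0 q0 r" by (rule Reach_mono[OF R3 phase_trans[OF ph4]])
    have R5: "Reach adj (\<lambda>_ _ _. False) q0 q0 r" by (rule Reach_mono[OF R4 final])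
    show "\<exists>n. cops_win_within adj n [q0, q0] r" using Reach_cww[OF R5] fin_nbrs by blast
  qed
  then show ?thesis unfolding cop_number_def by (rule Least_le)
qed

end

theorem lemma5:
  fixes s l m :: nat and V :: "'v set" and A :: "('v \<times> 'v) set"
    and inl outl :: "'v \<Rightarrow> 'v \<times> 'v \<Rightarrow> bool list" and \<sigma> :: "nat \<Rightarrow> 'v"
  assumes "s \<ge> 1" and "m \<ge> 1" and "l > card V + m + s"
    and "balanced_oriented_base (2 ^ (s - 1)) V A"
    and "\<forall>a \<in> V. bij_betw (inl a) {e \<in> A. snd e = a} {xs. length xs = s \<and> hd xs = False}"
    and "\<forall>a \<in> V. bij_betw (outl a) {e \<in> A. fst e = a} {xs. length xs = s \<and> hd xs = True}"
    and "bij_betw \<sigma> {..<card V} V"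
  shows "cop_number (Hverts s l m V A) (Hadj s l m V A inl outl \<sigma>) \<le> 2"
proof -
  interpret G5 s l m V A inl outl \<sigma>
    using assms by (unfold_locales) auto
  show ?thesis using main unfolding VV_def adj_def .
qed

end
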